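(* For every integer $k\geq 1$ we have $$\mathrm{CD}_k \subsetneq \mathrm{CH}_k \subsetneq \mathrm{CN}_k \qquad\text{and}\qquad \mathrm{RD}_k \subsetneq \mathrm{RH}_k \subsetneq \mathrm{RN}_k .$$
   Context: Fix a finite alphabet $\Sigma$. A $k$-dimensional vector addition system with states ($k$-VASS) is a tuple $(Q,q_0,F,\delta)$ where $Q$ is a finite set of states, $q_0\in Q$ is initial, $F\subseteq Q$ is the set of accepting states, and $\delta\subseteq Q\times\Sigma\times\mathbb{Z}^k\times Q$ is a finite set of transitions (no $\varepsilon$-transitions). A run on a word $w=a_1\cdots a_n$ is a sequence of transitions $(p_{i-1},a_i,d_i,p_i)$, $i=1,\dots,n$, with $p_0=q_0$, such that the counter vectors $v_0=\vec 0$, $v_i=v_{i-1}+d_i$ all lie in $\mathbb{N}^k$. Under coverability acceptance the run is accepting if $p_n\in F$; under reachability acceptance it is accepting if $p_n\in F$ and $v_n=\vec 0$. The language of the VASS (under the chosen acceptance) is the set of words having an accepting run. A VASS is deterministic if for every state $q$ and letter $a$ there is at most one transition of the form $(q,a,d,q')$. A VASS is history-deterministic if there is a resolver, i.e. a function $r$ mapping each finite sequence of transitions and each letter $a$ to a transition labelled $a$, such that for every word $w$ in the language, the sequence of transitions obtained by successively applying $r$ (to the sequence built so far and the next letter of $w$) is a run on $w$ (all counters stay nonnegative) and is accepting. $\mathrm{CD}_k$, $\mathrm{CH}_k$, $\mathrm{CN}_k$ denote the classes of languages recognised by deterministic, history-deterministic, and arbitrary (nondeterministic) $k$-VASS respectively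 under coverability acceptance; $\mathrm{RD}_k$, $\mathrm{RH}_k$, $\mathrm{RN}_k$ denote the analogous classes under reachability acceptance. *)

theory Defs
  imports Main
begin

type_synonym 'a trans = "nat \<times> 'a \<times> int list \<times> nat"

record 'a vass =
  states :: "nat set"
  init   :: nat
  final  :: "nat set"
  delta  :: "'a trans set"

definition src :: "'a trans \<Rightarrow> nat" where "src t = fst t"
definition lbl :: "'a trans \<Rightarrow> 'a" where "lbl t = fst (snd t)"
definition upd :: "'a trans \<Rightarrow> int list" where "upd t = fst (snd (snd t))"
definition tgt :: "'a trans \<Rightarrow> nat" where "tgt t = snd (snd (snd t))"

definition is_vass :: "nat \<Rightarrow> 'a vass \<Rightarrow> bool" where
  "is_vass k A \<longleftrightarrow> finite (states A) \<and> init A \<in> states A \<and> final A \<subseteq> states A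
     \<and> finite (delta A)
     \<and> (\<forall>t\<in>delta A. src t \<in> states A \<and> tgt t \<in> states A \<and> length (upd t) = k)"

definition counter :: "'a trans list \<Rightarrow> nat \<Rightarrow> int" where
  "counter ts i = (\<Sum>t\<leftarrow>ts. upd t ! i)"

definition end_state :: "'a vass \<Rightarrow> 'a trans list \<Rightarrow> nat" where
  "end_state A ts = (if ts = [] then init A else tgt (last ts))"

definition is_run :: "nat \<Rightarrow> 'a vass \<Rightarrow> 'a list \<Rightarrow> 'a trans list \<Rightarrow> bool" where
  "is_run k A w ts \<longleftrightarrow>
     set ts \<subseteq> delta A \<and> length ts = length w
     \<and> (\<forall>i<length ts. lbl (ts ! i) = w ! i)
     \<and> (ts \<noteq> [] \<longrightarrow> src (hd ts) = init A)
     \<and> (\<forall>i. Suc i < length ts \<longrightarrow> tgt (ts ! i) = src (ts ! Suc i))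
     \<and> (\<forall>j\<le>length ts. \<forall>i<k. 0 \<le> counter (take j ts) i)"

datatype acceptance = Cov | Reach

definition accepting_run :: "acceptance \<Rightarrow> nat \<Rightarrow> 'a vass \<Rightarrow> 'a list \<Rightarrow> 'a trans list \<Rightarrow> bool" where
  "accepting_run m k A w ts \<longleftrightarrow> is_run k A w ts \<and> end_state A ts \<in> final A
     \<and> (m = Reach \<longrightarrow> (\<forall>i<k. counter ts i = 0))"

definition lang :: "acceptance \<Rightarrow> nat \<Rightarrow> 'a vass \<Rightarrow> 'a list set" where
  "lang m k A = {w. \<exists>ts. accepting_run m k A w ts}"

definition deterministic :: "'a vass \<Rightarrow> bool" where
  "deterministic A \<longleftrightarrow> (\<forall>t1\<in>delta A. \<forall>t2\<in>delta A.
      src t1 = src t2 \<and> lbl t1 = lbl t2 \<longrightarrow> t1 = t2)"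

definition resolve :: "('a trans list \<Rightarrow> 'a \<Rightarrow> 'a trans) \<Rightarrow> 'a list \<Rightarrow> 'a trans list" where
  "resolve r w = foldl (\<lambda>ts a. ts @ [r ts a]) [] w"

definition is_resolver :: "acceptance \<Rightarrow> nat \<Rightarrow> 'a vass \<Rightarrow> ('a trans list \<Rightarrow> 'a \<Rightarrow> 'a trans) \<Rightarrow> bool" where
  "is_resolver m k A r \<longleftrightarrow>
     (\<forall>ts a. r ts a \<in> delta A \<and> lbl (r ts a) = a)
     \<and> (\<forall>w\<in>lang m k A. accepting_run m k A w (resolve r w))"

definition history_deterministic :: "acceptance \<Rightarrow> nat \<Rightarrow> 'a vass \<Rightarrow> bool" where
  "history_deterministic m k A \<longleftrightarrow> (\<exists>r. is_resolver m k A r)"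

text \<open>Language classes: D (deterministic), H (history-deterministic), N (all) k-VASS,
under acceptance mode m (Cov = coverability, Reach = reachability).\<close>
definition DetClass :: "acceptance \<Rightarrow> nat \<Rightarrow> 'a list set set" where
  "DetClass m k = {lang m k A | A. is_vass k A \<and> deterministic A}"

definition HDClass :: "acceptance \<Rightarrow> nat \<Rightarrow> 'a list set set" where
  "HDClass m k = {lang m k A | A. is_vass k A \<and> history_deterministic m k A}"

definition NDClass :: "acceptance \<Rightarrow> nat \<Rightarrow> 'a list set set" where
  "NDClass m k = {lang m k A | A. is_vass k A}"

end

theory Submission
  imports Defs
begin

lemma counter_append: "counter (xs @ ys) i = counter xs i + counter ys i"
  by (simp add: counter_def)
lemma counter_Nil[simp]: "counter [] i = 0" by (simp add: counter_def)
lemma counter_single[simp]: "counter [t] i = upd t ! i" by (simp add: counter_def)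
lemma counter_snoc: "counter (xs @ [t]) i = counter xs i + upd t ! i"
  by (simp add: counter_append)
lemma end_state_snoc[simp]: "end_state A (ts @ [t]) = tgt t"
  by (simp add: end_state_def)
lemma end_state_Nil[simp]: "end_state A [] = init A"
  by (simp add: end_state_def)

lemma is_run_Nil: "is_run k A w [] \<longleftrightarrow> w = []"
  by (auto simp: is_run_def)

lemma is_run_length: "is_run k A w ts \<Longrightarrow> length ts = length w"
  by (simp add: is_run_def)

lemma is_run_snoc:
  "is_run k A (w @ [x]) (ts @ [t]) \<longleftrightarrow>
     is_run k A w ts \<and> t \<in> delta A \<and> lbl t = x \<and> src t = end_state A ts
     \<and> (\<forall>i<k. 0 \<le> counter ts i + upd t ! i)"
proof
  assume H: "is_run k A (w @ [x]) (ts @ [t])"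
  then have len: "length ts = length w" by (simp add: is_run_def)
  have r1: "set ts \<subseteq> delta A" "t \<in> delta A" using H by (auto simp: is_run_def)
  have lab: "\<forall>i<length ts. lbl (ts ! i) = w ! i"
  proof (intro allI impI)
    fix i assume "i < length ts"
    with H len show "lbl (ts ! i) = w ! i" unfolding is_run_def
      by (metis length_append_singleton less_Suc_eq nth_append)
  qed
  have labt: "lbl t = x" using H len unfolding is_run_def
    by (metis length_append_singleton lessI nth_append_length)
  have hd1: "ts \<noteq> [] \<longrightarrow> src (hd ts) = init A" using H unfolding is_run_def by auto
  have ch: "\<forall>i. Suc i < length ts \<longrightarrow> tgt (ts ! i) = src (ts ! Suc i)"
  proof (intro allI impI)
    fix i assume a: "Suc i < length ts"
    then have "tgt ((ts@[t]) ! i) = src ((ts@[t]) ! Suc i)" using H unfolding is_run_def by auto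
    with a show "tgt (ts ! i) = src (ts ! Suc i)" by (simp add: nth_append)
  qed
  have nn: "\<forall>j\<le>length ts. \<forall>i<k. 0 \<le> counter (take j ts) i"
  proof (intro allI impI)
    fix j i assume "j \<le> length ts" "i < k"
    moreover have X: "\<forall>j\<le>length (ts@[t]). \<forall>i<k. 0 \<le> counter (take j (ts@[t])) i"
      using H unfolding is_run_def by blast
    ultimately have "0 \<le> counter (take j (ts@[t])) i" using X[rule_format, of j i] by simp
    with \<open>j \<le> length ts\<close> show "0 \<le> counter (take j ts) i" by simp
  qed
  have srct: "src t = end_state A ts"
  proof (cases "ts = []")
    case True then show ?thesis using H unfolding is_run_def by simp
  next
    case False
    then obtain n where n: "length ts = Suc n" by (cases ts) auto
    then have "tgt ((ts@[t]) ! n) = src ((ts@[t]) ! Suc n)" using H unfolding is_run_def by auto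
    with n False show ?thesis by (simp add: nth_append end_state_def last_conv_nth)
  qed
  have fin: "\<forall>i<k. 0 \<le> counter ts i + upd t ! i"
    using H unfolding is_run_def by (auto simp: counter_snoc dest: spec[of _ "Suc (length ts)"])
  show "is_run k A w ts \<and> t \<in> delta A \<and> lbl t = x \<and> src t = end_state A ts
     \<and> (\<forall>i<k. 0 \<le> counter ts i + upd t ! i)"
    using r1 len lab labt hd1 ch nn srct fin by (simp add: is_run_def)
next
  assume H: "is_run k A w ts \<and> t \<in> delta A \<and> lbl t = x \<and> src t = end_state A ts
     \<and> (\<forall>i<k. 0 \<le> counter ts i + upd t ! i)"
  then have len: "length ts = length w" by (simp add: is_run_def)
  have s: "set (ts @ [t]) \<subseteq> delta A" using H by (auto simp: is_run_def)
  have lab: "\<forall>i<length (ts@[t]). lbl ((ts@[t]) ! i) = (w@[x]) ! i"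
    using H len unfolding is_run_def by (auto simp: nth_append less_Suc_eq)
  have hd1: "src (hd (ts@[t])) = init A"
    using H by (cases ts) (auto simp: is_run_def)
  have ch: "\<forall>i. Suc i < length (ts@[t]) \<longrightarrow> tgt ((ts@[t]) ! i) = src ((ts@[t]) ! Suc i)"
  proof (intro allI impI)
    fix i assume a: "Suc i < length (ts@[t])"
    show "tgt ((ts@[t]) ! i) = src ((ts@[t]) ! Suc i)"
    proof (cases "Suc i < length ts")
      case True then show ?thesis using H by (simp add: nth_append is_run_def)
    next
      case False
      with a have si: "Suc i = length ts" by simp
      then have i: "i = length ts - 1" by simp
      have "ts \<noteq> []" using si by auto
      then show ?thesis using H si i
        by (simp add: nth_append end_state_def last_conv_nth)
    qed
  qed
  have nn: "\<forall>j\<le>length (ts@[t]). \<forall>i<k. 0 \<le> counter (take j (ts@[t])) i"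
  proof (intro allI impI)
    fix j i assume a: "j \<le> length (ts@[t])" "i < k"
    show "0 \<le> counter (take j (ts@[t])) i"
    proof (cases "j \<le> length ts")
      case True then show ?thesis using H a by (simp add: is_run_def)
    next
      case False
      then have "j = Suc (length ts)" using a by simp
      then show ?thesis using H a by (simp add: counter_snoc)
    qed
  qed
  show "is_run k A (w @ [x]) (ts @ [t])"
    using s len lab hd1 ch nn H unfolding is_run_def by simp
qed

lemma is_run_take:
  assumes "is_run k A w ts" shows "is_run k A (take j w) (take j ts)"
proof -
  have len: "length ts = length w" using assms by (simp add: is_run_def)
  have a1: "set (take j ts) \<subseteq> delta A" using assms unfolding is_run_def
    by (meson in_set_takeD subset_iff)
  have a2: "\<forall>i<length (take j ts). lbl (take j ts ! i) = take j w ! i"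
    using assms len unfolding is_run_def by simp
  have a3: "take j ts \<noteq> [] \<longrightarrow> src (hd (take j ts)) = init A"
    using assms unfolding is_run_def by (simp add: hd_take)
  have a4: "\<forall>i. Suc i < length (take j ts) \<longrightarrow> tgt (take j ts ! i) = src (take j ts ! Suc i)"
    using assms unfolding is_run_def by simp
  have a5: "\<forall>j'\<le>length (take j ts). \<forall>i<k. 0 \<le> counter (take j' (take j ts)) i"
  proof (intro allI impI)
    fix j' i assume "j' \<le> length (take j ts)" "i < k"
    then have "j' \<le> length ts" "take j' (take j ts) = take j' ts" by (auto simp: min_def split: if_splits)
    then show "0 \<le> counter (take j' (take j ts)) i" using assms \<open>i<k\<close> unfolding is_run_def by simp
  qed
  show ?thesis unfolding is_run_def using a1 a2 a3 a4 a5 len by simp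
qed


lemma end_state_snoc2[simp]: "end_state A (xs @ ys @ [t]) = tgt t"
  by (simp add: end_state_def)

lemma resolve_Nil[simp]: "resolve r [] = []" by (simp add: resolve_def)
lemma resolve_snoc: "resolve r (w @ [x]) = resolve r w @ [r (resolve r w) x]"
  by (simp add: resolve_def)
lemma resolve_length[simp]: "length (resolve r w) = length w"
  by (induction w rule: rev_induct) (auto simp: resolve_snoc)
lemma resolve_append: "\<exists>s. resolve r (u @ v) = resolve r u @ s \<and> length s = length v"
proof (induction v rule: rev_induct)
  case Nil then show ?case by simp
next
  case (snoc x v)
  then obtain s where "resolve r (u @ v) = resolve r u @ s" "length s = length v" by blast
  then show ?case by (simp add: resolve_snoc[of r "u @ v", simplified])
qed

lemma is_run_snocE:
  assumes "is_run k A w' ts'" "w' = w @ [x]"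
  obtains ts t where "ts' = ts @ [t]" "is_run k A w ts" "t \<in> delta A" "lbl t = x"
    "src t = end_state A ts" "\<forall>i<k. 0 \<le> counter ts i + upd t ! i"
proof -
  have "length ts' = Suc (length w)" using assms is_run_length by fastforce
  then obtain ts t where "ts' = ts @ [t]" by (metis length_Suc_conv_rev)
  with assms is_run_snoc show ?thesis using that by metis
qed

lemma is_run_transfer:
  assumes "is_run k A (u1 @ v) (ts1 @ s)" "length s = length v" "is_run k A u2 ts2"
    "length ts1 = length u1"
    "end_state A ts1 = end_state A ts2" "\<forall>i<k. counter ts1 i = counter ts2 i"
  shows "is_run k A (u2 @ v) (ts2 @ s) \<and> end_state A (ts1 @ s) = end_state A (ts2 @ s)
     \<and> (\<forall>i<k. counter (ts1 @ s) i = counter (ts2 @ s) i)"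
  using assms
proof (induction v arbitrary: s rule: rev_induct)
  case Nil then show ?case by simp
next
  case (snoc x v)
  then obtain s' t where s: "s = s' @ [t]" by (metis length_Suc_conv_rev length_append_singleton)
  have "is_run k A ((u1 @ v) @ [x]) ((ts1 @ s') @ [t])" using snoc.prems s by simp
  then have R: "is_run k A (u1 @ v) (ts1 @ s')" "t \<in> delta A" "lbl t = x"
     "src t = end_state A (ts1 @ s')" "\<forall>i<k. 0 \<le> counter (ts1 @ s') i + upd t ! i"
    unfolding is_run_snoc by auto
  have "length s' = length v" using snoc.prems s by simp
  then have IH: "is_run k A (u2 @ v) (ts2 @ s') \<and> end_state A (ts1 @ s') = end_state A (ts2 @ s')
     \<and> (\<forall>i<k. counter (ts1 @ s') i = counter (ts2 @ s') i)"
    using snoc.IH R(1) snoc.prems by blast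
  have "is_run k A ((u2 @ v) @ [x]) ((ts2 @ s') @ [t])"
    unfolding is_run_snoc using IH R by auto
  then show ?case using s IH by (simp add: counter_append)
qed



lemma det_prefix:
  assumes "deterministic A" "is_run k A w1 ts1" "is_run k A w2 ts2"
    "j \<le> length w1" "j \<le> length w2" "take j w1 = take j w2"
  shows "take j ts1 = take j ts2"
  using assms(4-6)
proof (induction j)
  case 0 then show ?case by simp
next
  case (Suc j)
  have l1: "length ts1 = length w1" "length ts2 = length w2"
    using assms is_run_length by auto
  have "take j (take (Suc j) w1) = take j (take (Suc j) w2)" using Suc.prems(3) by simp
  then have tj: "take j w1 = take j w2" by (simp add: min_def)
  then have IH: "take j ts1 = take j ts2" using Suc by simp
  have "take (Suc j) w1 ! j = take (Suc j) w2 ! j" using Suc.prems(3) by simp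
  then have wj: "w1 ! j = w2 ! j" by simp
  have r1: "is_run k A (take j w1 @ [w1 ! j]) (take j ts1 @ [ts1 ! j])"
    using is_run_take[OF assms(2), of "Suc j"] Suc.prems l1
    by (simp add: take_Suc_conv_app_nth)
  have r2: "is_run k A (take j w2 @ [w2 ! j]) (take j ts2 @ [ts2 ! j])"
    using is_run_take[OF assms(3), of "Suc j"] Suc.prems l1
    by (simp add: take_Suc_conv_app_nth)
  have a: "ts1!j \<in> delta A" "lbl (ts1!j) = w1!j" "src (ts1!j) = end_state A (take j ts1)"
    using r1 unfolding is_run_snoc by auto
  have b: "ts2!j \<in> delta A" "lbl (ts2!j) = w2!j" "src (ts2!j) = end_state A (take j ts2)"
    using r2 unfolding is_run_snoc by auto
  have D: "\<forall>t1\<in>delta A. \<forall>t2\<in>delta A. src t1 = src t2 \<and> lbl t1 = lbl t2 \<longrightarrow> t1 = t2"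
    using assms(1) by (simp add: deterministic_def)
  have "ts1 ! j = ts2 ! j"
    using D a b IH wj by auto
  then show ?case using IH Suc.prems l1 by (simp add: take_Suc_conv_app_nth)
qed

lemma run_end_state_in:
  assumes "is_vass k A" "is_run k A w ts" shows "end_state A ts \<in> states A"
proof (cases "ts = []")
  case True then show ?thesis using assms by (simp add: is_vass_def)
next
  case False
  have "set ts \<subseteq> delta A" using assms(2) by (simp add: is_run_def)
  then have "last ts \<in> delta A" using False by auto
  then show ?thesis using assms(1) False by (auto simp: is_vass_def end_state_def)
qed

lemma run_counter_nonneg:
  assumes "is_run k A w ts" "i < k" shows "0 \<le> counter ts i"
proof -
  have "\<forall>j\<le>length ts. \<forall>i<k. 0 \<le> counter (take j ts) i" using assms(1) by (simp add: is_run_def)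
  then have "0 \<le> counter (take (length ts) ts) i" using assms(2) by blast
  then show ?thesis by simp
qed

lemma counter_bound:
  assumes "set ts \<subseteq> delta A" "\<forall>t\<in>delta A. \<bar>upd t ! i\<bar> \<le> C"
  shows "\<bar>counter ts i\<bar> \<le> C * int (length ts)"
  using assms
proof (induction ts)
  case Nil then show ?case by simp
next
  case (Cons t ts)
  have "counter (t # ts) i = upd t ! i + counter ts i" by (simp add: counter_def)
  moreover have "\<bar>upd t ! i\<bar> \<le> C" using Cons by auto
  moreover have "\<bar>counter ts i\<bar> \<le> C * int (length ts)" using Cons by auto
  ultimately show ?case by (simp add: algebra_simps)
qed

lemma reach_imp_cov: "accepting_run Reach k A w ts \<Longrightarrow> accepting_run Cov k A w ts"
  by (simp add: accepting_run_def)

lemma lang_reach_sub: "lang Reach k A \<subseteq> lang Cov k A"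
  unfolding lang_def using reach_imp_cov by blast

lemma resolver_prefix_run:
  assumes "is_resolver m k A r" "u @ v \<in> lang m k A"
  shows "is_run k A u (resolve r u)"
proof -
  have "accepting_run m k A (u @ v) (resolve r (u @ v))" using assms by (simp add: is_resolver_def)
  then have R: "is_run k A (u @ v) (resolve r (u @ v))" by (simp add: accepting_run_def)
  obtain s where s: "resolve r (u @ v) = resolve r u @ s" "length s = length v"
    using resolve_append by blast
  have "is_run k A (take (length u) (u @ v)) (take (length u) (resolve r (u @ v)))"
    using is_run_take[OF R] .
  then show ?thesis using s by simp
qed

lemma resolver_residual:
  assumes "is_resolver m k A r" "u1 @ v \<in> lang m k A" "is_run k A u2 (resolve r u2)"
    "end_state A (resolve r u1) = end_state A (resolve r u2)"
    "\<forall>i<k. counter (resolve r u1) i = counter (resolve r u2) i"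
  shows "u2 @ v \<in> lang m k A"
proof -
  have acc: "accepting_run m k A (u1 @ v) (resolve r (u1 @ v))" using assms by (simp add: is_resolver_def)
  obtain s where s: "resolve r (u1 @ v) = resolve r u1 @ s" "length s = length v"
    using resolve_append by blast
  have R: "is_run k A (u1 @ v) (resolve r u1 @ s)" using acc s by (simp add: accepting_run_def)
  have T: "is_run k A (u2 @ v) (resolve r u2 @ s) \<and> end_state A (resolve r u1 @ s) = end_state A (resolve r u2 @ s)
     \<and> (\<forall>i<k. counter (resolve r u1 @ s) i = counter (resolve r u2 @ s) i)"
    by (rule is_run_transfer[OF R s(2) assms(3) _ assms(4,5)]) simp
  have "accepting_run m k A (u2 @ v) (resolve r u2 @ s)"
    using acc s T unfolding accepting_run_def by auto
  then show ?thesis unfolding lang_def by blast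
qed


lemma run_step:
  assumes "is_run k A w ts" "l < length ts"
  shows "ts ! l \<in> delta A \<and> lbl (ts ! l) = w ! l \<and> src (ts ! l) = end_state A (take l ts)
     \<and> end_state A (take (Suc l) ts) = tgt (ts ! l)"
proof -
  have len: "length ts = length w" using assms(1) by (rule is_run_length)
  have "is_run k A (take (Suc l) w) (take (Suc l) ts)" by (rule is_run_take[OF assms(1)])
  moreover have "take (Suc l) w = take l w @ [w ! l]" using assms(2) len by (simp add: take_Suc_conv_app_nth)
  moreover have "take (Suc l) ts = take l ts @ [ts ! l]" using assms(2) by (simp add: take_Suc_conv_app_nth)
  ultimately have "is_run k A (take l w @ [w ! l]) (take l ts @ [ts ! l])" by simp
  then show ?thesis unfolding is_run_snoc using \<open>take (Suc l) ts = take l ts @ [ts ! l]\<close> by simp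
qed

lemma lang_obtain:
  assumes "w \<in> lang m k A" obtains ts where "accepting_run m k A w ts"
  using assms unfolding lang_def by blast

lemma det_impossible:
  fixes la lb :: 'a
  assumes vass: "is_vass k D" and det: "deterministic D" and L: "lang m k D = L"
    and i: "\<And>n M. 1 \<le> M \<Longrightarrow> n \<le> M \<Longrightarrow> replicate n la @ replicate M lb @ [la] \<in> L"
    and ii: "\<And>n. replicate n la @ replicate n lb \<in> L"
    and iii: "\<And>n p. 1 \<le> p \<Longrightarrow> replicate n la @ replicate (n + p) lb \<notin> L"
  shows False
proof -
  define N where "N = card (states D)"
  have finS: "finite (states D)" and initS: "init D \<in> states D" using vass by (auto simp: is_vass_def)
  then have N1: "1 \<le> N" unfolding N_def by (metis One_nat_def Suc_leI card_gt_0_iff empty_iff)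
  define W where "W = replicate N la @ replicate (2*N) lb @ [la]"
  have "W \<in> lang m k D" using i[of "2*N" N] N1 L unfolding W_def by simp
  then obtain \<rho> where acc\<rho>: "accepting_run m k D W \<rho>" by (rule lang_obtain)
  then have R: "is_run k D W \<rho>" by (simp add: accepting_run_def)
  have lenW: "length W = 3*N + 1" unfolding W_def by simp
  have len\<rho>: "length \<rho> = 3*N + 1" using is_run_length[OF R] lenW by simp
  have Wb: "\<And>l. N \<le> l \<Longrightarrow> l < 3*N \<Longrightarrow> W ! l = lb"
    unfolding W_def by (auto simp: nth_append)
  define s where "s j = end_state D (take (N + j) \<rho>)" for j
  have sS: "s j \<in> states D" for j
    unfolding s_def using run_end_state_in[OF vass is_run_take[OF R]] .
  have "\<not> inj_on s {0..N}"
  proof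
    assume "inj_on s {0..N}"
    then have "card (s ` {0..N}) = N + 1" by (simp add: card_image)
    moreover have "card (s ` {0..N}) \<le> N" unfolding N_def
      using sS finS by (intro card_mono) auto
    ultimately show False by simp
  qed
  then obtain x y where xy: "x \<in> {0..N}" "y \<in> {0..N}" "x \<noteq> y" "s x = s y"
    unfolding inj_on_def by blast
  obtain j1 j2 where j12: "j1 < j2" "j2 \<le> N" "s j1 = s j2"
  proof (cases "x < y")
    case True then show ?thesis using that xy by auto
  next
    case False then show ?thesis using that[of y x] xy by auto
  qed
  define p where "p = j2 - j1"
  have p1: "1 \<le> p" "p \<le> N" using j12 unfolding p_def by auto
  have per: "j1 + d + p \<le> 2*N \<Longrightarrow> s (j1 + d + p) = s (j1 + d)" for d
  proof (induction d)
    case 0 then show ?case using j12 unfolding p_def by simp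
  next
    case (Suc d)
    define l1 where "l1 = N + (j1 + d)"
    define l2 where "l2 = N + (j1 + d + p)"
    have l12: "l1 < length \<rho>" "l2 < length \<rho>" using Suc.prems len\<rho> p1 unfolding l1_def l2_def by auto
    have st1: "\<rho> ! l1 \<in> delta D \<and> lbl (\<rho> ! l1) = W ! l1 \<and> src (\<rho> ! l1) = end_state D (take l1 \<rho>)
     \<and> end_state D (take (Suc l1) \<rho>) = tgt (\<rho> ! l1)" by (rule run_step[OF R l12(1)])
    have st2: "\<rho> ! l2 \<in> delta D \<and> lbl (\<rho> ! l2) = W ! l2 \<and> src (\<rho> ! l2) = end_state D (take l2 \<rho>)
     \<and> end_state D (take (Suc l2) \<rho>) = tgt (\<rho> ! l2)" by (rule run_step[OF R l12(2)])
    have w12: "W ! l1 = lb" "W ! l2 = lb" using Suc.prems p1 unfolding l1_def l2_def by (auto intro!: Wb)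
    have IH: "s (j1 + d + p) = s (j1 + d)" using Suc by simp
    have "src (\<rho> ! l1) = src (\<rho> ! l2)" using st1 st2 IH unfolding s_def l1_def l2_def by simp
    moreover have "lbl (\<rho> ! l1) = lbl (\<rho> ! l2)" using st1 st2 w12 by simp
    ultimately have "\<rho> ! l1 = \<rho> ! l2" using det st1 st2 unfolding deterministic_def by blast
    then have "end_state D (take (Suc l1) \<rho>) = end_state D (take (Suc l2) \<rho>)" using st1 st2 by simp
    then show ?case unfolding s_def l1_def l2_def by (simp add: add.commute add.left_commute)
  qed
  have sNp: "s (N + p) = s N"
    using per[of "N - j1"] j12 p1 by simp
  define V where "V = replicate N la @ replicate (N + p) lb"
  have V_take: "take (2*N + p) W = V" unfolding W_def V_def using p1
    by (simp add: replicate_add[symmetric] take_append)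
  have RV: "is_run k D V (take (2*N + p) \<rho>)" using is_run_take[OF R, of "2*N+p"] V_take by simp
  have endV: "end_state D (take (2*N + p) \<rho>) = s N" using sNp unfolding s_def
    by (simp add: mult_2 add.assoc)
  have "replicate N la @ replicate N lb \<in> lang m k D" using ii L by simp
  then obtain \<rho>2 where acc2: "accepting_run m k D (replicate N la @ replicate N lb) \<rho>2" by (rule lang_obtain)
  then have R2: "is_run k D (replicate N la @ replicate N lb) \<rho>2" by (simp add: accepting_run_def)
  have len2: "length \<rho>2 = 2*N" using is_run_length[OF R2] by simp
  have "take (2*N) \<rho>2 = take (2*N) \<rho>"
    by (rule det_prefix[OF det R2 R]) (auto simp: W_def lenW take_append)
  then have r2eq: "\<rho>2 = take (2*N) \<rho>" using len2 by simp
  have end2: "end_state D \<rho>2 = s N" unfolding r2eq s_def by (simp add: mult_2)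
  have fin2: "s N \<in> final D" using acc2 end2 by (simp add: accepting_run_def)
  show False
  proof (cases m)
    case Cov
    have "accepting_run Cov k D V (take (2*N + p) \<rho>)"
      using RV endV fin2 by (simp add: accepting_run_def)
    then have "V \<in> L" using L Cov unfolding lang_def by blast
    then show False using iii[OF p1(1)] unfolding V_def by blast
  next
    case Reach
    have "replicate N la @ replicate N lb @ [la] \<in> lang m k D" using i[of N N] N1 L by simp
    then obtain \<rho>3 where acc3: "accepting_run m k D (replicate N la @ replicate N lb @ [la]) \<rho>3"
      by (rule lang_obtain)
    then have R3: "is_run k D (replicate N la @ replicate N lb @ [la]) \<rho>3" by (simp add: accepting_run_def)
    have len3: "length \<rho>3 = 2*N + 1" using is_run_length[OF R3] by simp
    have "replicate N la @ replicate (N+p) lb @ [la] \<in> lang m k D" using i[of "N+p" N] p1 L by simp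
    then obtain \<rho>4 where acc4: "accepting_run m k D (replicate N la @ replicate (N+p) lb @ [la]) \<rho>4"
      by (rule lang_obtain)
    then have R4: "is_run k D (replicate N la @ replicate (N+p) lb @ [la]) \<rho>4" by (simp add: accepting_run_def)
    have len4: "length \<rho>4 = 2*N + p + 1" using is_run_length[OF R4] by simp
    have t3: "take (2*N) \<rho>3 = take (2*N) \<rho>2"
      by (rule det_prefix[OF det R3 R2]) (auto simp: take_append)
    have t4: "take (2*N + p) \<rho>4 = take (2*N + p) \<rho>"
      by (rule det_prefix[OF det R4 R]) (use p1 in \<open>auto simp: W_def take_append replicate_add[symmetric]\<close>)
    have s3: "\<rho>3 ! (2*N) \<in> delta D \<and> lbl (\<rho>3 ! (2*N)) = (replicate N la @ replicate N lb @ [la]) ! (2*N)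
      \<and> src (\<rho>3 ! (2*N)) = end_state D (take (2*N) \<rho>3) \<and> end_state D (take (Suc (2*N)) \<rho>3) = tgt (\<rho>3 ! (2*N))"
      by (rule run_step[OF R3]) (simp add: len3)
    have s4: "\<rho>4 ! (2*N+p) \<in> delta D \<and> lbl (\<rho>4 ! (2*N+p)) = (replicate N la @ replicate (N+p) lb @ [la]) ! (2*N+p)
      \<and> src (\<rho>4 ! (2*N+p)) = end_state D (take (2*N+p) \<rho>4) \<and> end_state D (take (Suc (2*N+p)) \<rho>4) = tgt (\<rho>4 ! (2*N+p))"
      by (rule run_step[OF R4]) (simp add: len4)
    have lab3: "lbl (\<rho>3 ! (2*N)) = la" using s3 by (simp add: nth_append mult_2)
    have lab4: "lbl (\<rho>4 ! (2*N+p)) = la" using s4 by (simp add: nth_append mult_2)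
    have src3: "src (\<rho>3 ! (2*N)) = s N" using s3 t3 len2 end2 by simp
    have src4: "src (\<rho>4 ! (2*N+p)) = s N" using s4 t4 endV by simp
    have teq: "\<rho>3 ! (2*N) = \<rho>4 ! (2*N+p)"
      using det s3 s4 lab3 lab4 src3 src4 unfolding deterministic_def by metis
    have dec3: "\<rho>3 = take (2*N) \<rho>3 @ [\<rho>3 ! (2*N)]" using len3
      by (metis append_take_drop_id Cons_nth_drop_Suc drop_all le_refl lessI Suc_eq_plus1)
    have dec4: "\<rho>4 = take (2*N+p) \<rho>4 @ [\<rho>4 ! (2*N+p)]" using len4
      by (metis append_take_drop_id Cons_nth_drop_Suc drop_all le_refl lessI Suc_eq_plus1)
    have z2: "\<forall>i<k. counter \<rho>2 i = 0" using acc2 Reach by (simp add: accepting_run_def)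
    have z3: "\<forall>i<k. counter \<rho>3 i = 0" using acc3 Reach by (simp add: accepting_run_def)
    have z4: "\<forall>i<k. counter \<rho>4 i = 0" using acc4 Reach by (simp add: accepting_run_def)
    have zV: "\<forall>i<k. counter (take (2*N + p) \<rho>) i = 0"
    proof (intro allI impI)
      fix i assume ik: "i < k"
      have "counter \<rho>3 i = counter \<rho>2 i + upd (\<rho>3 ! (2*N)) ! i"
        using dec3 t3 len2 by (metis counter_snoc take_all order_refl)
      then have u: "upd (\<rho>3 ! (2*N)) ! i = 0" using z2 z3 ik by simp
      have "counter \<rho>4 i = counter (take (2*N + p) \<rho>) i + upd (\<rho>4 ! (2*N+p)) ! i"
        using dec4 t4 by (metis counter_snoc)
      then show "counter (take (2*N + p) \<rho>) i = 0" using u teq z4 ik by simp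
    qed
    have "accepting_run Reach k D V (take (2*N + p) \<rho>)"
      using RV endV fin2 zV by (simp add: accepting_run_def)
    then have "V \<in> L" using L Reach unfolding lang_def by blast
    then show False using iii[OF p1(1)] unfolding V_def by blast
  qed
qed


definition zv :: "nat \<Rightarrow> int list" where "zv k = replicate k 0"
definition ev :: "nat \<Rightarrow> int \<Rightarrow> int list" where "ev k c = c # replicate (k - 1) 0"

lemma zv_nth[simp]: "i < k \<Longrightarrow> zv k ! i = 0" by (simp add: zv_def)
lemma ev_nth0[simp]: "ev k c ! 0 = c" by (simp add: ev_def)
lemma ev_nth[simp]: "0 < i \<Longrightarrow> i < k \<Longrightarrow> ev k c ! i = 0" by (simp add: ev_def nth_Cons')
lemma zv_len[simp]: "length (zv k) = k" by (simp add: zv_def)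
lemma ev_len[simp]: "0 < k \<Longrightarrow> length (ev k c) = k" by (simp add: ev_def)
lemma five_eq: "{0,1,2,3,4::nat} = {..4}" by auto

definition TB :: "'a \<Rightarrow> 'a \<Rightarrow> nat \<Rightarrow> 'a trans set" where
  "TB la lb k = {(0, la, ev k 1, 0), (0, lb, ev k (-1), 1), (0, lb, zv k, 2), (1, lb, ev k (-1), 1),
     (1, lb, zv k, 2), (2, lb, zv k, 2), (1, la, zv k, 3), (2, la, zv k, 3)}
     \<union> {(q, x, zv k, 4) | q x. q \<le> 4}"

definition BB :: "'a \<Rightarrow> 'a \<Rightarrow> nat \<Rightarrow> 'a vass" where
  "BB la lb k = \<lparr>states = {0,1,2,3,4}, init = 0, final = {0,1,3}, delta = TB la lb k\<rparr>"

lemma BB_simps[simp]: "states (BB la lb k) = {0,1,2,3,4}" "init (BB la lb k) = 0"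
  "final (BB la lb k) = {0,1,3}" "delta (BB la lb k) = TB la lb k"
  by (simp_all add: BB_def)

lemma TB_vass: "1 \<le> k \<Longrightarrow> is_vass k (BB la lb (k::nat) :: ('a::finite) vass)"
proof -
  assume k: "1 \<le> k"
  have "{(q, x, zv k, 4) | (q::nat) (x::'a). q \<le> 4} = (\<lambda>(q, x::'a). (q, x, zv k, 4::nat)) ` ({..4::nat} \<times> UNIV)"
    by auto
  then have "finite {(q, x::'a, zv k, 4::nat) | (q::nat) x. q \<le> 4}" by simp
  then have fin: "finite (TB la lb k)" unfolding TB_def by simp
  have "\<forall>t\<in>TB la lb k. src t \<le> 4 \<and> tgt t \<le> 4 \<and> length (upd t) = k"
    using k unfolding TB_def by (auto simp: src_def tgt_def upd_def)
  then show ?thesis using fin unfolding is_vass_def BB_simps five_eq by auto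
qed

lemma TB_upd_other: "t \<in> TB la lb k \<Longrightarrow> 0 < i \<Longrightarrow> i < k \<Longrightarrow> upd t ! i = 0"
  unfolding TB_def by (auto simp: upd_def)

lemma TB_counter_other: "set ts \<subseteq> TB la lb k \<Longrightarrow> 0 < i \<Longrightarrow> i < k \<Longrightarrow> counter ts i = 0"
  by (induction ts) (auto simp: counter_def TB_upd_other)

definition rB :: "'a \<Rightarrow> 'a \<Rightarrow> nat \<Rightarrow> 'a trans list \<Rightarrow> 'a \<Rightarrow> 'a trans" where
  "rB la lb k ts x = (let q = end_state (BB la lb k) ts; c = counter ts 0 in
     if q = 0 \<and> x = la then (0, la, ev k 1, 0)
     else if (q = 0 \<or> q = 1) \<and> x = lb then (if 0 < c then (q, lb, ev k (-1), 1) else (q, lb, zv k, 2))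
     else if q = 2 \<and> x = lb then (2, lb, zv k, 2)
     else if (q = 1 \<or> q = 2) \<and> x = la then (q, la, zv k, 3)
     else (min q 4, x, zv k, 4))"

lemma rB_delta: "rB la lb k ts x \<in> TB la lb k \<and> lbl (rB la lb k ts x) = x"
  unfolding rB_def TB_def Let_def by (auto simp: lbl_def)

lemma rB_run:
  assumes k: "1 \<le> k"
  shows "is_run k (BB la lb k) w (resolve (rB la lb k) w) \<and> end_state (BB la lb k) (resolve (rB la lb k) w) \<le> 4"
proof (induction w rule: rev_induct)
  case Nil then show ?case by (simp add: is_run_def)
next
  case (snoc x w)
  define \<sigma> where "\<sigma> = resolve (rB la lb k) w"
  define t where "t = rB la lb k \<sigma> x"
  have IH: "is_run k (BB la lb k) w \<sigma>" "end_state (BB la lb k) \<sigma> \<le> 4" using snoc \<sigma>_def by auto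
  have c0: "0 \<le> counter \<sigma> 0" using run_counter_nonneg[OF IH(1)] k by simp
  have sub: "set \<sigma> \<subseteq> TB la lb k" using IH(1) by (simp add: is_run_def)
  have t1: "t \<in> TB la lb k" "lbl t = x" using rB_delta[of la lb k \<sigma> x] unfolding t_def by auto
  have t2: "src t = end_state (BB la lb k) \<sigma>"
    using IH(2) unfolding t_def rB_def Let_def by (auto simp: src_def)
  have t3: "\<forall>i<k. 0 \<le> counter \<sigma> i + upd t ! i"
  proof (intro allI impI)
    fix i assume ik: "i < k"
    show "0 \<le> counter \<sigma> i + upd t ! i"
    proof (cases "i = 0")
      case True
      then show ?thesis using c0 k unfolding t_def rB_def Let_def by (auto simp: upd_def)
    next
      case False
      then show ?thesis using TB_counter_other[OF sub] TB_upd_other[OF t1(1)] ik by simp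
    qed
  qed
  have "is_run k (BB la lb k) (w @ [x]) (\<sigma> @ [t])" unfolding is_run_snoc using IH t1 t2 t3 by simp
  moreover have "tgt t \<le> 4" using t1(1) unfolding TB_def by (auto simp: tgt_def)
  ultimately show ?case by (simp add: \<sigma>_def t_def resolve_snoc)
qed


definition InvB :: "nat \<Rightarrow> int \<Rightarrow> nat \<Rightarrow> int \<Rightarrow> bool" where
  "InvB e c e' c' \<longleftrightarrow> (e = 0 \<longrightarrow> e' = 0 \<and> c' = c) \<and> (e = 1 \<longrightarrow> e' = 1 \<and> c' = c)
     \<and> (e = 2 \<longrightarrow> (e' = 1 \<or> e' = 2) \<and> c' \<le> c) \<and> (e = 3 \<longrightarrow> e' = 3 \<and> c' \<le> c)"

lemma rB_0a: "end_state (BB la lb k) ts = 0 \<Longrightarrow> rB la lb k ts la = (0, la, ev k 1, 0)"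
  by (simp add: rB_def Let_def)
lemma rB_lb: "la \<noteq> lb \<Longrightarrow> end_state (BB la lb k) ts = q \<Longrightarrow> q = 0 \<or> q = 1 \<Longrightarrow>
  rB la lb k ts lb = (if 0 < counter ts 0 then (q, lb, ev k (-1), 1) else (q, lb, zv k, 2))"
  by (auto simp add: rB_def Let_def)
lemma rB_2b: "la \<noteq> lb \<Longrightarrow> end_state (BB la lb k) ts = 2 \<Longrightarrow> rB la lb k ts lb = (2, lb, zv k, 2)"
  by (simp add: rB_def Let_def)
lemma rB_12a: "la \<noteq> lb \<Longrightarrow> end_state (BB la lb k) ts = q \<Longrightarrow> q = 1 \<or> q = 2 \<Longrightarrow>
  rB la lb k ts la = (q, la, zv k, 3)"
  by (auto simp add: rB_def Let_def)

lemma rB_sim: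
  assumes k: "1 \<le> k" and ab: "la \<noteq> lb"
  shows "is_run k (BB la lb k) w \<rho> \<Longrightarrow>
    InvB (end_state (BB la lb k) \<rho>) (counter \<rho> 0)
         (end_state (BB la lb k) (resolve (rB la lb k) w)) (counter (resolve (rB la lb k) w) 0)"
proof (induction w arbitrary: \<rho> rule: rev_induct)
  case Nil
  then have "\<rho> = []" using is_run_length by fastforce
  then show ?case by (simp add: InvB_def)
next
  case (snoc x w)
  obtain \<rho>0 t where D: "\<rho> = \<rho>0 @ [t]" "is_run k (BB la lb k) w \<rho>0" "t \<in> TB la lb k" "lbl t = x"
    "src t = end_state (BB la lb k) \<rho>0" "\<forall>i<k. 0 \<le> counter \<rho>0 i + upd t ! i"
    using is_run_snocE[OF snoc.prems refl] by (metis BB_simps(4))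
  define \<sigma> where "\<sigma> = resolve (rB la lb k) w"
  have IH: "InvB (end_state (BB la lb k) \<rho>0) (counter \<rho>0 0) (end_state (BB la lb k) \<sigma>) (counter \<sigma> 0)"
    using snoc.IH D(2) \<sigma>_def by blast
  have k0': "0 < k" using k by simp
  have c0: "0 \<le> counter \<sigma> 0" unfolding \<sigma>_def by (rule run_counter_nonneg[OF conjunct1[OF rB_run[OF k]] k0'])
  have nn: "0 \<le> counter \<rho>0 0 + upd t ! 0" using D(6) k by simp
  obtain q y d q' where t: "t = (q, y, d, q')" by (cases t) auto
  have k0: "0 < k" using k by simp
  have tc: "t = (0, la, ev k 1, 0) \<or> t = (0, lb, ev k (-1), 1) \<or> t = (0, lb, zv k, 2) \<or> t = (1, lb, ev k (-1), 1)
     \<or> t = (1, lb, zv k, 2) \<or> t = (2, lb, zv k, 2) \<or> t = (1, la, zv k, 3) \<or> t = (2, la, zv k, 3) \<or> q' = 4"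
    using D(3) unfolding TB_def t by auto
  define e where "e = end_state (BB la lb k) \<rho>0"
  define e' where "e' = end_state (BB la lb k) \<sigma>"
  have IH': "InvB e (counter \<rho>0 0) e' (counter \<sigma> 0)" using IH e_def e'_def by simp
  have se: "src t = e" "lbl t = x" using D(4,5) e_def by auto
  have "InvB q' (counter \<rho>0 0 + d ! 0) (tgt (rB la lb k \<sigma> x)) (counter \<sigma> 0 + upd (rB la lb k \<sigma> x) ! 0)"
  proof -
    consider "t = (0, la, ev k 1, 0)" | "t = (0, lb, ev k (-1), 1)" | "t = (0, lb, zv k, 2)" | "t = (1, lb, ev k (-1), 1)"
     | "t = (1, lb, zv k, 2)" | "t = (2, lb, zv k, 2)" | "t = (1, la, zv k, 3)" | "t = (2, la, zv k, 3)" | "q' = 4"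
      using tc by blast
    then show ?thesis
    proof cases
      case 1 then show ?thesis using IH' se t e'_def rB_0a[of la lb k \<sigma>]
        by (auto simp: InvB_def src_def lbl_def tgt_def upd_def)
    next
      case 2 then show ?thesis using IH' se t e'_def rB_lb[OF ab, of k \<sigma> 0] nn
        by (auto simp: InvB_def src_def lbl_def tgt_def upd_def)
    next
      case 3 then show ?thesis using IH' se t e'_def rB_lb[OF ab, of k \<sigma> 0] nn c0 k0
        by (auto simp: InvB_def src_def lbl_def tgt_def upd_def)
    next
      case 4 then show ?thesis using IH' se t e'_def rB_lb[OF ab, of k \<sigma> 1] nn
        by (auto simp: InvB_def src_def lbl_def tgt_def upd_def)
    next
      case 5 then show ?thesis using IH' se t e'_def rB_lb[OF ab, of k \<sigma> 1] nn c0 k0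
        by (auto simp: InvB_def src_def lbl_def tgt_def upd_def)
    next
      case 6
      then have "e = 2" using se t by (simp add: src_def)
      then have E: "(e' = 1 \<or> e' = 2) \<and> counter \<sigma> 0 \<le> counter \<rho>0 0" using IH' by (simp add: InvB_def)
      show ?thesis
      proof (cases "e' = 1")
        case True then show ?thesis using 6 E se t e'_def rB_lb[OF ab, of k \<sigma> 1] nn c0 k0
          by (auto simp: InvB_def src_def lbl_def tgt_def upd_def)
      next
        case False then show ?thesis using 6 E se t e'_def rB_2b[OF ab, of k \<sigma>] nn c0 k0
          by (auto simp: InvB_def src_def lbl_def tgt_def upd_def)
      qed
    next
      case 7 then show ?thesis using IH' se t e'_def rB_12a[OF ab, of k \<sigma> 1] nn c0 k0
        by (auto simp: InvB_def src_def lbl_def tgt_def upd_def)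
    next
      case 8
      then have "e = 2" using se t by (simp add: src_def)
      then have E: "(e' = 1 \<or> e' = 2) \<and> counter \<sigma> 0 \<le> counter \<rho>0 0" using IH' by (simp add: InvB_def)
      then show ?thesis using 8 se t e'_def rB_12a[OF ab, of k \<sigma> e'] nn c0 k0
        by (auto simp: InvB_def src_def lbl_def tgt_def upd_def)
    next
      case 9 then show ?thesis by (simp add: InvB_def)
    qed
  qed
  then show ?case using D(1) t by (simp add: \<sigma>_def resolve_snoc counter_snoc tgt_def upd_def)
qed


lemma BB_hd:
  assumes k: "1 \<le> k" and ab: "la \<noteq> lb"
  shows "is_resolver m k (BB la lb k) (rB la lb k)"
  unfolding is_resolver_def
proof (intro conjI allI ballI)
  fix ts x show "rB la lb k ts x \<in> delta (BB la lb k)" "lbl (rB la lb k ts x) = x"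
    using rB_delta[of la lb k ts x] by auto
next
  fix w assume "w \<in> lang m k (BB la lb k)"
  then obtain \<rho> where acc: "accepting_run m k (BB la lb k) w \<rho>" by (rule lang_obtain)
  define \<sigma> where "\<sigma> = resolve (rB la lb k) w"
  have R: "is_run k (BB la lb k) w \<rho>" using acc by (simp add: accepting_run_def)
  have S: "is_run k (BB la lb k) w \<sigma>" unfolding \<sigma>_def by (simp add: rB_run[OF k])
  have I: "InvB (end_state (BB la lb k) \<rho>) (counter \<rho> 0) (end_state (BB la lb k) \<sigma>) (counter \<sigma> 0)"
    using rB_sim[OF k ab R] \<sigma>_def by simp
  have k0: "0 < k" using k by simp
  have c0: "0 \<le> counter \<sigma> 0" by (rule run_counter_nonneg[OF S k0])
  have fin: "end_state (BB la lb k) \<rho> \<in> {0,1,3}" using acc by (simp add: accepting_run_def)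
  have fin': "end_state (BB la lb k) \<sigma> \<in> {0,1,3}" using fin I by (auto simp: InvB_def)
  have Z: "\<forall>i<k. counter \<sigma> i = 0" if "m = Reach"
  proof (intro allI impI)
    fix i assume ik: "i < k"
    show "counter \<sigma> i = 0"
    proof (cases "i = 0")
      case True
      have "counter \<rho> 0 = 0" using acc that k0 by (simp add: accepting_run_def)
      have "end_state (BB la lb k) \<rho> = 0 \<or> end_state (BB la lb k) \<rho> = 1 \<or> end_state (BB la lb k) \<rho> = 3"
        using fin by simp
      then have "counter \<sigma> 0 \<le> counter \<rho> 0" using I unfolding InvB_def by auto
      then show ?thesis using True c0 \<open>counter \<rho> 0 = 0\<close> by simp
    next
      case False
      have "set \<sigma> \<subseteq> TB la lb k" using S by (simp add: is_run_def)
      then show ?thesis using TB_counter_other[of \<sigma> la lb k i] False ik by simp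
    qed
  qed
  have "accepting_run m k (BB la lb k) w \<sigma>"
    unfolding accepting_run_def
  proof (intro conjI impI)
    show "is_run k (BB la lb k) w \<sigma>" by (rule S)
    show "end_state (BB la lb k) \<sigma> \<in> final (BB la lb k)" using fin' by simp
    show "\<forall>i<k. counter \<sigma> i = 0" if "m = Reach" using Z[OF that] .
  qed
  then show "accepting_run m k (BB la lb k) w (resolve (rB la lb k) w)" using \<sigma>_def by simp
qed



lemma rep_snoc: "replicate (Suc n) x = replicate n x @ [x]"
  by (simp add: replicate_append_same)

lemma rB_as:
  "end_state (BB la lb k) (resolve (rB la lb k) (replicate n la)) = 0
   \<and> counter (resolve (rB la lb k) (replicate n la)) 0 = int n"
proof (induction n)
  case 0 then show ?case by simp
next
  case (Suc n)
  then show ?case unfolding rep_snoc resolve_snoc by (simp add: counter_snoc rB_0a tgt_def upd_def)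
qed

lemma rB_abs:
  assumes ab: "la \<noteq> lb" and k: "0 < k"
  shows "end_state (BB la lb k) (resolve (rB la lb k) (replicate n la @ replicate j lb))
            = (if j = 0 then 0 else if j \<le> n then 1 else 2)
   \<and> counter (resolve (rB la lb k) (replicate n la @ replicate j lb)) 0
            = (if j \<le> n then int n - int j else 0)"
proof (induction j)
  case 0 then show ?case using rB_as[of la lb k n] by simp
next
  case (Suc j)
  define \<sigma> where "\<sigma> = resolve (rB la lb k) (replicate n la @ replicate j lb)"
  have e: "end_state (BB la lb k) \<sigma> = (if j = 0 then 0 else if j \<le> n then 1 else 2)"
    and c: "counter \<sigma> 0 = (if j \<le> n then int n - int j else 0)" using Suc \<sigma>_def by auto
  have eq: "resolve (rB la lb k) (replicate n la @ replicate (Suc j) lb) = \<sigma> @ [rB la lb k \<sigma> lb]"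
  proof -
    have "replicate n la @ replicate (Suc j) lb = (replicate n la @ replicate j lb) @ [lb]" by (simp add: replicate_append_same)
    then show ?thesis unfolding \<sigma>_def by (simp only: resolve_snoc)
  qed
  show ?case
  proof (cases "j = 0 \<or> j \<le> n")
    case True
    have "end_state (BB la lb k) \<sigma> = 0 \<or> end_state (BB la lb k) \<sigma> = 1" using e True by auto
    then have r: "rB la lb k \<sigma> lb = (if 0 < counter \<sigma> 0 then (end_state (BB la lb k) \<sigma>, lb, ev k (-1), 1)
        else (end_state (BB la lb k) \<sigma>, lb, zv k, 2))" using rB_lb[OF ab] by blast
    show ?thesis
    proof (cases "j < n")
      case True
      then show ?thesis using eq r c k by (simp add: counter_snoc tgt_def upd_def)
    next
      case False
      then have "counter \<sigma> 0 = 0 \<or> (j = 0 \<and> n = 0)" using c \<open>j = 0 \<or> j \<le> n\<close> by auto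
      then show ?thesis using eq r c False \<open>j = 0 \<or> j \<le> n\<close> k by (auto simp: counter_snoc tgt_def upd_def)
    qed
  next
    case False
    then have "end_state (BB la lb k) \<sigma> = 2" "counter \<sigma> 0 = 0" using e c by auto
    then show ?thesis using eq rB_2b[OF ab] False k by (simp add: counter_snoc tgt_def upd_def)
  qed
qed

lemma rB_aba:
  assumes ab: "la \<noteq> lb" and M: "1 \<le> M" and k: "0 < k"
  shows "end_state (BB la lb k) (resolve (rB la lb k) (replicate n la @ replicate M lb @ [la])) = 3
   \<and> counter (resolve (rB la lb k) (replicate n la @ replicate M lb @ [la])) 0
            = (if M \<le> n then int n - int M else 0)"
proof -
  define \<sigma> where "\<sigma> = resolve (rB la lb k) (replicate n la @ replicate M lb)"
  have e: "end_state (BB la lb k) \<sigma> = (if M \<le> n then 1 else 2)"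
    and c: "counter \<sigma> 0 = (if M \<le> n then int n - int M else 0)" using rB_abs[OF ab k, of n M] M \<sigma>_def by auto
  have eq: "resolve (rB la lb k) (replicate n la @ replicate M lb @ [la]) = \<sigma> @ [rB la lb k \<sigma> la]"
  proof -
    have "replicate n la @ replicate M lb @ [la] = (replicate n la @ replicate M lb) @ [la]" by simp
    then show ?thesis unfolding \<sigma>_def by (simp only: resolve_snoc)
  qed
  have "end_state (BB la lb k) \<sigma> = 1 \<or> end_state (BB la lb k) \<sigma> = 2" using e by auto
  then have "rB la lb k \<sigma> la = (end_state (BB la lb k) \<sigma>, la, zv k, 3)" using rB_12a[OF ab] by blast
  then show ?thesis using eq c k by (simp add: counter_snoc tgt_def upd_def)
qed



lemma BB_mem_i:
  assumes ab: "la \<noteq> lb" and k: "1 \<le> k" and M: "1 \<le> M" "n \<le> M"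
  shows "replicate n la @ replicate M lb @ [la] \<in> lang m k (BB la lb k)"
proof -
  define w where "w = replicate n la @ replicate M lb @ [la]"
  define \<sigma> where "\<sigma> = resolve (rB la lb k) w"
  have k0: "0 < k" using k by simp
  have S: "is_run k (BB la lb k) w \<sigma>" unfolding \<sigma>_def by (simp add: rB_run[OF k])
  have ec: "end_state (BB la lb k) \<sigma> = 3" "counter \<sigma> 0 = 0"
    using rB_aba[OF ab M(1) k0, of n] M unfolding \<sigma>_def w_def by auto
  have "set \<sigma> \<subseteq> TB la lb k" using S by (simp add: is_run_def)
  then have "\<forall>i<k. counter \<sigma> i = 0" using ec TB_counter_other by (metis gr0I)
  then have "accepting_run m k (BB la lb k) w \<sigma>" using S ec by (simp add: accepting_run_def)
  then show ?thesis unfolding w_def lang_def by blast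
qed

lemma BB_mem_ii:
  assumes ab: "la \<noteq> lb" and k: "1 \<le> k"
  shows "replicate n la @ replicate n lb \<in> lang m k (BB la lb k)"
proof -
  define w where "w = replicate n la @ replicate n lb"
  have k0: "0 < k" using k by simp
  define \<sigma> where "\<sigma> = resolve (rB la lb k) w"
  have S: "is_run k (BB la lb k) w \<sigma>" unfolding \<sigma>_def by (simp add: rB_run[OF k])
  have ec: "end_state (BB la lb k) \<sigma> \<in> {0,1}" "counter \<sigma> 0 = 0"
    using rB_abs[OF ab k0, of n n] unfolding \<sigma>_def w_def by auto
  have "set \<sigma> \<subseteq> TB la lb k" using S by (simp add: is_run_def)
  then have "\<forall>i<k. counter \<sigma> i = 0" using ec TB_counter_other by (metis gr0I)
  then have "accepting_run m k (BB la lb k) w \<sigma>" using S ec by (auto simp: accepting_run_def)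
  then show ?thesis unfolding w_def lang_def by blast
qed



definition nA :: "'a \<Rightarrow> 'a list \<Rightarrow> int" where "nA x w = int (length (filter (\<lambda>y. y = x) w))"

lemma BB_inv1:
  assumes ab: "la \<noteq> lb"
  shows "is_run k (BB la lb k) w \<rho> \<Longrightarrow>
    (end_state (BB la lb k) \<rho> = 0 \<longrightarrow> counter \<rho> 0 = nA la w \<and> lb \<notin> set w)
    \<and> (end_state (BB la lb k) \<rho> = 1 \<longrightarrow> counter \<rho> 0 = nA la w - nA lb w)
    \<and> (end_state (BB la lb k) \<rho> = 3 \<longrightarrow> w \<noteq> [] \<and> last w = la)"
proof (induction w arbitrary: \<rho> rule: rev_induct)
  case Nil
  then have "\<rho> = []" using is_run_length by fastforce
  then show ?case by (simp add: nA_def)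
next
  case (snoc x w)
  obtain \<rho>0 t where D: "\<rho> = \<rho>0 @ [t]" "is_run k (BB la lb k) w \<rho>0" "t \<in> TB la lb k" "lbl t = x"
    "src t = end_state (BB la lb k) \<rho>0" "\<forall>i<k. 0 \<le> counter \<rho>0 i + upd t ! i"
    using is_run_snocE[OF snoc.prems refl] by (metis BB_simps(4))
  have IH: "(end_state (BB la lb k) \<rho>0 = 0 \<longrightarrow> counter \<rho>0 0 = nA la w \<and> lb \<notin> set w)
    \<and> (end_state (BB la lb k) \<rho>0 = 1 \<longrightarrow> counter \<rho>0 0 = nA la w - nA lb w)" using snoc.IH D(2) by blast
  obtain q y d q' where t: "t = (q, y, d, q')" by (cases t) auto
  have tc: "t = (0, la, ev k 1, 0) \<or> t = (0, lb, ev k (-1), 1) \<or> t = (0, lb, zv k, 2) \<or> t = (1, lb, ev k (-1), 1)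
     \<or> t = (1, lb, zv k, 2) \<or> t = (2, lb, zv k, 2) \<or> t = (1, la, zv k, 3) \<or> t = (2, la, zv k, 3) \<or> q' = 4"
    using D(3) unfolding TB_def t by auto
  have "(q' = 0 \<longrightarrow> counter \<rho>0 0 + d ! 0 = nA la (w @ [x]) \<and> lb \<notin> set (w @ [x]))
    \<and> (q' = 1 \<longrightarrow> counter \<rho>0 0 + d ! 0 = nA la (w @ [x]) - nA lb (w @ [x]))
    \<and> (q' = 3 \<longrightarrow> w @ [x] \<noteq> [] \<and> last (w @ [x]) = x \<and> x = la)"
    using tc IH D(4,5) ab t by (auto simp: nA_def src_def lbl_def filter_empty_conv)
  then show ?case using D(1) t by (simp add: counter_snoc tgt_def upd_def)
qed

lemma BB_not_iii:
  assumes ab: "la \<noteq> lb" and k: "1 \<le> k" and p: "1 \<le> p"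
  shows "replicate n la @ replicate (n + p) lb \<notin> lang m k (BB la lb k)"
proof
  assume "replicate n la @ replicate (n + p) lb \<in> lang m k (BB la lb k)"
  then have "replicate n la @ replicate (n + p) lb \<in> lang Cov k (BB la lb k)"
    using lang_reach_sub by (cases m) auto
  then obtain \<rho> where acc: "accepting_run Cov k (BB la lb k) (replicate n la @ replicate (n + p) lb) \<rho>"
    by (rule lang_obtain)
  then have R: "is_run k (BB la lb k) (replicate n la @ replicate (n + p) lb) \<rho>" by (simp add: accepting_run_def)
  have fin: "end_state (BB la lb k) \<rho> \<in> {0,1,3}" using acc by (simp add: accepting_run_def)
  note I = BB_inv1[OF ab R]
  have c0: "0 \<le> counter \<rho> 0" using run_counter_nonneg[OF R, of 0] k by simp
  have lbin: "lb \<in> set (replicate n la @ replicate (n + p) lb)" using p by simp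
  have last: "last (replicate n la @ replicate (n + p) lb) = lb" using p
    by (metis append_is_Nil_conv last_append last_replicate le_add2 le_zero_eq not_one_le_zero replicate_empty)
  have cnt: "nA la (replicate n la @ replicate (n + p) lb) - nA lb (replicate n la @ replicate (n + p) lb) = - int p"
    using ab by (simp add: nA_def filter_replicate)
  show False using fin I c0 lbin last cnt ab p by auto
qed



definition compl :: "nat \<Rightarrow> 'a vass \<Rightarrow> 'a vass" where
  "compl k A = A\<lparr>states := insert (Suc (Max (states A))) (states A),
     delta := delta A \<union> {(Suc (Max (states A)), x, replicate k 0, Suc (Max (states A))) | x. True}\<rparr>"

lemma compl_simps[simp]: "init (compl k A) = init A" "final (compl k A) = final A"
  "delta (compl k A) = delta A \<union> {(Suc (Max (states A)), x, replicate k 0, Suc (Max (states A))) | x. True}"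
  "states (compl k A) = insert (Suc (Max (states A))) (states A)"
  by (simp_all add: compl_def)

lemma end_state_compl[simp]: "end_state (compl k A) ts = end_state A ts"
  by (simp add: end_state_def)

lemma fresh_notin: "finite (states A) \<Longrightarrow> Suc (Max (states A)) \<notin> states A"
  using Max_ge Suc_n_not_le_n by blast

lemma compl_vass:
  assumes "is_vass k (A :: ('a::finite) vass)" shows "is_vass k (compl k A)"
proof -
  have eq: "{(Suc (Max (states A)), x, replicate k 0, Suc (Max (states A))) | x::'a. True}
      = (\<lambda>x. (Suc (Max (states A)), x, replicate k 0, Suc (Max (states A)))) ` UNIV" (is "?S = _") by auto
  have fS: "finite ?S" unfolding eq by (rule finite_imageI) simp
  have f: "finite (delta (compl k A))" using assms fS by (simp add: is_vass_def)
  have t: "\<forall>t\<in>delta (compl k A). src t \<in> states (compl k A) \<and> tgt t \<in> states (compl k A) \<and> length (upd t) = k"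
    using assms unfolding is_vass_def compl_simps by (auto simp: src_def tgt_def upd_def)
  have a: "finite (states A)" "init A \<in> states A" "final A \<subseteq> states A" using assms by (auto simp: is_vass_def)
  show ?thesis unfolding is_vass_def
  proof (intro conjI)
    show "finite (states (compl k A))" using a by simp
    show "init (compl k A) \<in> states (compl k A)" using a by simp
    show "final (compl k A) \<subseteq> states (compl k A)" using a by auto
  qed (use f t in auto)
qed

lemma compl_run_sub: "is_run k A w ts \<Longrightarrow> is_run k (compl k A) w ts"
  by (auto simp: is_run_def)

lemma compl_run:
  assumes V: "is_vass k A"
  shows "is_run k (compl k A) w ts \<Longrightarrow> is_run k A w ts"
proof (induction w arbitrary: ts rule: rev_induct)
  case Nil
  then have "ts = []" using is_run_length by fastforce
  then show ?case by (simp add: is_run_def)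
next
  case (snoc x w)
  obtain ts0 t where D: "ts = ts0 @ [t]" "is_run k (compl k A) w ts0" "t \<in> delta (compl k A)" "lbl t = x"
    "src t = end_state (compl k A) ts0" "\<forall>i<k. 0 \<le> counter ts0 i + upd t ! i"
    using is_run_snocE[OF snoc.prems refl] by blast
  have R0: "is_run k A w ts0" using snoc.IH D(2) by blast
  have "src t \<in> states A" using D(5) run_end_state_in[OF V R0] by simp
  moreover have "Suc (Max (states A)) \<notin> states A" using V fresh_notin by (auto simp: is_vass_def)
  ultimately have "t \<in> delta A" using D(3) by (auto simp: src_def)
  then show ?case unfolding D(1) is_run_snoc using D R0 by simp
qed

lemma compl_lang:
  assumes V: "is_vass k A" shows "lang m k (compl k A) = lang m k A"
proof -
  have E: "\<And>w ts. is_run k (compl k A) w ts \<longleftrightarrow> is_run k A w ts"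
    using compl_run[OF V] compl_run_sub by blast
  show ?thesis unfolding lang_def accepting_run_def E by simp
qed

definition rC :: "nat \<Rightarrow> 'a vass \<Rightarrow> 'a trans list \<Rightarrow> 'a \<Rightarrow> 'a trans" where
  "rC k A ts x = (if \<exists>t\<in>delta A. src t = end_state A ts \<and> lbl t = x
     then (SOME t. t \<in> delta A \<and> src t = end_state A ts \<and> lbl t = x)
     else (Suc (Max (states A)), x, replicate k 0, Suc (Max (states A))))"

lemma rC_delta: "rC k A ts x \<in> delta (compl k A) \<and> lbl (rC k A ts x) = x"
proof (cases "\<exists>t\<in>delta A. src t = end_state A ts \<and> lbl t = x")
  case True
  then have "(SOME t. t \<in> delta A \<and> src t = end_state A ts \<and> lbl t = x) \<in> delta A
     \<and> src (SOME t. t \<in> delta A \<and> src t = end_state A ts \<and> lbl t = x) = end_state A ts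
     \<and> lbl (SOME t. t \<in> delta A \<and> src t = end_state A ts \<and> lbl t = x) = x"
    using someI_ex[of "\<lambda>t. t \<in> delta A \<and> src t = end_state A ts \<and> lbl t = x"] by blast
  then show ?thesis using True by (simp add: rC_def)
next
  case False
  then have "rC k A ts x = (Suc (Max (states A)), x, replicate k 0, Suc (Max (states A)))"
    unfolding rC_def by presburger
  then show ?thesis by (simp add: lbl_def)
qed

lemma rC_det:
  assumes det: "deterministic A" and R: "is_run k A w \<rho>"
  shows "j \<le> length w \<Longrightarrow> resolve (rC k A) (take j w) = take j \<rho>"
proof (induction j)
  case 0 then show ?case by simp
next
  case (Suc j)
  have len: "length \<rho> = length w" using is_run_length[OF R] .
  have jl: "j < length \<rho>" using Suc.prems len by simp
  have st: "\<rho> ! j \<in> delta A \<and> lbl (\<rho> ! j) = w ! j \<and> src (\<rho> ! j) = end_state A (take j \<rho>)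
     \<and> end_state A (take (Suc j) \<rho>) = tgt (\<rho> ! j)" by (rule run_step[OF R jl])
  have IH: "resolve (rC k A) (take j w) = take j \<rho>" using Suc by simp
  have ex: "\<exists>t\<in>delta A. src t = end_state A (take j \<rho>) \<and> lbl t = w ! j" using st by blast
  define t' where "t' = (SOME t. t \<in> delta A \<and> src t = end_state A (take j \<rho>) \<and> lbl t = w ! j)"
  have t'P: "t' \<in> delta A \<and> src t' = end_state A (take j \<rho>) \<and> lbl t' = w ! j"
    unfolding t'_def using someI_ex[of "\<lambda>t. t \<in> delta A \<and> src t = end_state A (take j \<rho>) \<and> lbl t = w ! j"] ex by blast
  have DD: "\<forall>t1\<in>delta A. \<forall>t2\<in>delta A. src t1 = src t2 \<and> lbl t1 = lbl t2 \<longrightarrow> t1 = t2"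
    using det by (simp add: deterministic_def)
  have "t' = \<rho> ! j" using DD t'P st by auto
  then have "rC k A (take j \<rho>) (w ! j) = \<rho> ! j" using ex unfolding rC_def t'_def by simp
  moreover have "take (Suc j) w = take j w @ [w ! j]" using Suc.prems by (simp add: take_Suc_conv_app_nth)
  moreover have "take (Suc j) \<rho> = take j \<rho> @ [\<rho> ! j]" using jl by (simp add: take_Suc_conv_app_nth)
  ultimately show ?case using IH by (simp add: resolve_snoc)
qed

lemma det_sub_hd:
  assumes k: "1 \<le> k" shows "(DetClass m k :: ('a::finite) list set set) \<subseteq> HDClass m k"
proof
  fix L :: "'a list set" assume "L \<in> DetClass m k"
  then obtain A where A: "L = lang m k A" "is_vass k A" "deterministic A" by (auto simp: DetClass_def)
  have V: "is_vass k (compl k A)" using compl_vass[OF A(2)] .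
  have "is_resolver m k (compl k A) (rC k A)"
    unfolding is_resolver_def
  proof (intro conjI allI ballI)
    fix ts x show "rC k A ts x \<in> delta (compl k A)" "lbl (rC k A ts x) = x" using rC_delta[of k A ts x] by auto
  next
    fix w assume "w \<in> lang m k (compl k A)"
    then have "w \<in> lang m k A" using compl_lang[OF A(2)] by simp
    then obtain \<rho> where acc: "accepting_run m k A w \<rho>" by (rule lang_obtain)
    then have R: "is_run k A w \<rho>" by (simp add: accepting_run_def)
    have "resolve (rC k A) w = \<rho>" using rC_det[OF A(3) R, of "length w"] is_run_length[OF R] by simp
    then show "accepting_run m k (compl k A) w (resolve (rC k A) w)"
      using acc compl_run_sub[OF R] by (simp add: accepting_run_def)
  qed
  then have "history_deterministic m k (compl k A)" by (auto simp: history_deterministic_def)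
  then show "L \<in> HDClass m k" using V A compl_lang[OF A(2)] unfolding HDClass_def by auto
qed

lemma hd_sub_nd: "HDClass m k \<subseteq> NDClass m k"
  unfolding HDClass_def NDClass_def by auto

lemma det_lt_hd:
  assumes k: "1 \<le> k" and ab: "(la::'a::finite) \<noteq> lb"
  shows "lang m k (BB la lb k) \<in> HDClass m k" "lang m k (BB la lb k) \<notin> DetClass m k"
proof -
  show "lang m k (BB la lb k) \<in> HDClass m k"
    using TB_vass[OF k] BB_hd[OF k ab] unfolding HDClass_def history_deterministic_def by blast
  show "lang m k (BB la lb k) \<notin> DetClass m k"
  proof
    assume "lang m k (BB la lb k) \<in> DetClass m k"
    then obtain D :: "'a vass" where D: "lang m k (BB la lb k) = lang m k D" "is_vass k D" "deterministic D"
      by (auto simp: DetClass_def)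
    show False
    proof (rule det_impossible[OF D(2) D(3) D(1)[symmetric], of la lb])
      fix n M :: nat assume "1 \<le> M" "n \<le> M"
      then show "replicate n la @ replicate M lb @ [la] \<in> lang m k (BB la lb k)"
        by (rule BB_mem_i[OF ab k])
    next
      fix n show "replicate n la @ replicate n lb \<in> lang m k (BB la lb k)"
        by (rule BB_mem_ii[OF ab k])
    next
      fix n p :: nat assume "1 \<le> p"
      then show "replicate n la @ replicate (n + p) lb \<notin> lang m k (BB la lb k)"
        by (rule BB_not_iii[OF ab k])
    qed
  qed
qed


locale KB =
  fixes la lb :: "'a::finite" and k K :: nat
  assumes ab: "la \<noteq> lb" and k0: "0 < k" and K0: "0 < K"
begin

definition st :: "nat \<Rightarrow> nat \<Rightarrow> nat" where "st i j = Suc (i + Suc K * j)"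

lemma st_inj: "i \<le> K \<Longrightarrow> i' \<le> K \<Longrightarrow> st i j = st i' j' \<longleftrightarrow> i = i' \<and> j = j'"
proof
  assume a: "i \<le> K" "i' \<le> K" "st i j = st i' j'"
  then have h: "i + Suc K * j = i' + Suc K * j'" by (simp add: st_def)
  have "(i + Suc K * j) mod Suc K = i" using a by (metis mod_mult_self2 mod_less le_imp_less_Suc)
  moreover have "(i' + Suc K * j') mod Suc K = i'" using a by (metis mod_mult_self2 mod_less le_imp_less_Suc)
  ultimately have "i = i'" using h by metis
  moreover have "Suc K * j = Suc K * j'" using h \<open>i = i'\<close> by (simp only: add_left_cancel)
  then have "j = j'" by (metis Zero_not_Suc mult_left_cancel)
  ultimately show "i = i' \<and> j = j'" by simp
qed simp
lemma st_ne0[simp]: "st i j \<noteq> 0" "0 \<noteq> st i j" by (simp_all add: st_def)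

definition g :: "nat \<Rightarrow> nat \<Rightarrow> int" where
  "g i c = (if Suc c = i then 1 else if c = K then -1 else 0)"

definition stepK :: "nat \<Rightarrow> nat \<Rightarrow> 'a \<Rightarrow> (int list \<times> nat) option" where
  "stepK i j x = (if x = la then (if j < K then Some (if Suc j = i then ev k 1 else zv k, j)
       else if j = K then Some (ev k (-1), K) else None)
     else if x = lb then (if j < K + i then Some (zv k, Suc j) else None) else None)"

definition nb :: "'a list \<Rightarrow> nat" where "nb w = length (filter (\<lambda>y. y = lb) w)"

lemma nb_simps[simp]: "nb [] = 0" "nb (w @ [x]) = nb w + (if x = lb then 1 else 0)"
  "nb (x # w) = (if x = lb then 1 else 0) + nb w" "nb (u @ v) = nb u + nb v"
  by (simp_all add: nb_def)

lemma nb_rep_la[simp]: "nb (replicate n la) = 0" using ab by (simp add: nb_def filter_replicate)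
lemma nb_rep_lb[simp]: "nb (replicate n lb) = n" by (simp add: nb_def filter_replicate)

lemma stepK_props:
  assumes "stepK i j x = Some (d, j')" "1 \<le> i" "i \<le> K"
  shows "d ! 0 = (if x = la then g i j else 0) \<and> j' = (if x = lb then Suc j else j)
    \<and> (\<forall>l. 0 < l \<longrightarrow> l < k \<longrightarrow> d ! l = 0) \<and> length d = k \<and> j \<le> 2*K \<and> j' \<le> 2*K
    \<and> (x = la \<longrightarrow> j \<le> K)"
  using assms ab k0 unfolding stepK_def g_def
  by (auto split: if_splits)

definition TK :: "'a trans set" where
  "TK = {(st i j, x, d, st i j') | i j x d j'. 1 \<le> i \<and> i \<le> K \<and> j \<le> 2*K \<and> stepK i j x = Some (d, j')}
      \<union> {(0, x, d, st i j') | i x d j'. 1 \<le> i \<and> i \<le> K \<and> stepK i 0 x = Some (d, j')}"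

definition SK :: "nat set" where "SK = insert 0 ((\<lambda>(i, j). st i j) ` ({..K} \<times> {..2*K}))"

definition AK :: "'a vass" where
  "AK = \<lparr>states = SK, init = 0, final = {st i (K + i) | i. 1 \<le> i \<and> i \<le> K}, delta = TK\<rparr>"

lemma AK_simps[simp]: "states AK = SK" "init AK = 0" "final AK = {st i (K + i) | i. 1 \<le> i \<and> i \<le> K}"
  "delta AK = TK" by (simp_all add: AK_def)

lemma TK_sub: "TK \<subseteq> SK \<times> UNIV \<times> {ev k 1, ev k (-1), zv k} \<times> SK"
proof
  fix t assume "t \<in> TK"
  then show "t \<in> SK \<times> UNIV \<times> {ev k 1, ev k (-1), zv k} \<times> SK"
    unfolding TK_def SK_def stepK_def by (auto split: if_splits)
qed

lemma AK_vass: "is_vass k AK"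
proof -
  have fS: "finite SK" unfolding SK_def by simp
  have fT: "finite TK" by (rule finite_subset[OF TK_sub]) (use fS in simp)
  have "st i (K + i) \<in> SK" if "1 \<le> i" "i \<le> K" for i
  proof -
    have "(i, K + i) \<in> {..K} \<times> {..2*K}" using that by auto
    then show ?thesis unfolding SK_def by (rule insertI2[OF image_eqI[of _ _ "(i, K+i)"], rotated]) simp
  qed
  then have fin: "final AK \<subseteq> states AK" by auto
  have tr: "\<forall>t\<in>TK. src t \<in> SK \<and> tgt t \<in> SK \<and> length (upd t) = k"
  proof
    fix t assume t: "t \<in> TK"
    then have "t \<in> SK \<times> UNIV \<times> {ev k 1, ev k (-1), zv k} \<times> SK" using TK_sub by blast
    then show "src t \<in> SK \<and> tgt t \<in> SK \<and> length (upd t) = k" using k0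
      by (auto simp: src_def tgt_def upd_def)
  qed
  show ?thesis unfolding is_vass_def using fS fT fin tr by (simp add: SK_def)
qed

fun fc :: "nat \<Rightarrow> nat \<Rightarrow> 'a list \<Rightarrow> int" where
  "fc i c [] = 0"
| "fc i c (y # w) = (if y = la then g i c else 0) + fc i (if y = lb then Suc c else c) w"

lemma fc_append: "fc i c (u @ v) = fc i c u + fc i (c + nb u) v"
  by (induction u arbitrary: c) (auto simp: ab)

lemma fc_snoc: "fc i c (w @ [x]) = fc i c w + (if x = la then g i (c + nb w) else 0)"
  by (simp add: fc_append)

lemma fc_rep_la: "fc i c (replicate n la) = int n * g i c"
  by (induction n) (auto simp: ab algebra_simps)

lemma fc_rep_lb: "fc i c (replicate n lb) = 0"
  by (induction n arbitrary: c) (auto simp: ab[symmetric])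

definition pre :: "nat list \<Rightarrow> 'a list" where
  "pre xs = concat (map (\<lambda>n. replicate n la @ [lb]) xs)"

lemma pre_simps[simp]: "pre [] = []" "pre (x # xs) = replicate x la @ [lb] @ pre xs"
  by (simp_all add: pre_def)

lemma nb_pre[simp]: "nb (pre xs) = length xs"
  by (induction xs) (auto simp: ab[symmetric])

lemma length_pre: "length (pre xs) = sum_list (map Suc xs)"
  by (induction xs) auto

lemma fc_pre: "c + length xs \<le> K \<Longrightarrow> 1 \<le> i \<Longrightarrow>
  fc i c (pre xs) = (if c < i \<and> i \<le> c + length xs then int (xs ! (i - 1 - c)) else 0)"
proof (induction xs arbitrary: c)
  case Nil then show ?case by simp
next
  case (Cons x xs)
  have IH: "fc i (Suc c) (pre xs) = (if Suc c < i \<and> i \<le> Suc c + length xs then int (xs ! (i - 1 - Suc c)) else 0)"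
    using Cons by simp
  have "fc i c (pre (x # xs)) = int x * g i c + fc i (Suc c) (pre xs)"
    by (simp add: fc_append fc_rep_la fc_rep_lb ab[symmetric])
  moreover have "g i c = (if Suc c = i then 1 else 0)" using Cons.prems unfolding g_def by auto
  ultimately have E: "fc i c (pre (x # xs)) = int x * (if Suc c = i then 1 else 0) + fc i (Suc c) (pre xs)"
    by simp
  show ?case
  proof (cases "i = Suc c")
    case True then show ?thesis using E IH by simp
  next
    case False
    show ?thesis
    proof (cases "Suc c < i")
      case True
      have e: "i - 1 - c = Suc (i - 1 - Suc c)" using True by simp
      show ?thesis using E IH False True e by simp
    next
      case False2: False
      then show ?thesis using E IH False by auto
    qed
  qed
qed

end


context KB begin

lemma end_state_single[simp]: "end_state A [t] = tgt t" by (simp add: end_state_def)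

lemma TK_cases:
  assumes "t \<in> TK"
  obtains (D1) i j x d j' where "t = (st i j, x, d, st i j')" "1 \<le> i" "i \<le> K" "j \<le> 2*K" "stepK i j x = Some (d, j')"
  | (D0) i x d j' where "t = (0, x, d, st i j')" "1 \<le> i" "i \<le> K" "stepK i 0 x = Some (d, j')"
  using assms unfolding TK_def by blast

lemma g_nonneg: "c < K \<Longrightarrow> 0 \<le> g i c" by (simp add: g_def)
lemma g_K: "i \<le> K \<Longrightarrow> g i K = -1" by (simp add: g_def)

lemma AK_inv:
  "is_run k AK w ts \<Longrightarrow> ts \<noteq> [] \<Longrightarrow>
     \<exists>i. 1 \<le> i \<and> i \<le> K \<and> end_state AK ts = st i (nb w) \<and> counter ts 0 = fc i 0 w"
proof (induction w arbitrary: ts rule: rev_induct)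
  case Nil then show ?case using is_run_length by fastforce
next
  case (snoc x w)
  obtain ts0 t where D: "ts = ts0 @ [t]" "is_run k AK w ts0" "t \<in> TK" "lbl t = x"
    "src t = end_state AK ts0" "\<forall>i<k. 0 \<le> counter ts0 i + upd t ! i"
    using is_run_snocE[OF snoc.prems(1) refl] by (metis AK_simps(4))
  show ?case
  proof (cases "ts0 = []")
    case True
    then have w: "w = []" using D(2) is_run_length by fastforce
    have s0: "src t = 0" using D(5) True by simp
    from D(3) show ?thesis
    proof (cases rule: TK_cases)
      case (D1 i j x' d j') then show ?thesis using s0 by (simp add: src_def)
    next
      case (D0 i x' d j')
      have P: "d ! 0 = (if x' = la then g i 0 else 0) \<and> j' = (if x' = lb then Suc 0 else 0)"
        using stepK_props[OF D0(4) D0(2,3)] by simp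
      have "x' = x" using D(4) D0(1) by (simp add: lbl_def)
      then have "end_state AK ts = st i (nb (w @ [x])) \<and> counter ts 0 = fc i 0 (w @ [x])"
        using P D0 D(1) True w ab by (auto simp: tgt_def upd_def)
      then show ?thesis using D0(2,3) by blast
    qed
  next
    case False
    obtain i where I: "1 \<le> i" "i \<le> K" "end_state AK ts0 = st i (nb w)" "counter ts0 0 = fc i 0 w"
      using snoc.IH[OF D(2) False] by blast
    from D(3) show ?thesis
    proof (cases rule: TK_cases)
      case (D0 i' x' d j') then show ?thesis using D(5) I by (simp add: src_def)
    next
      case (D1 i' j x' d j')
      have "st i' j = st i (nb w)" using D(5) I D1 by (simp add: src_def)
      then have ij: "i' = i" "j = nb w" using st_inj I D1 by auto
      have x: "x' = x" using D(4) D1(1) by (simp add: lbl_def)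
      have P: "d ! 0 = (if x = la then g i (nb w) else 0) \<and> j' = (if x = lb then Suc (nb w) else nb w)"
        using stepK_props[OF D1(5) D1(2,3)] ij x by simp
      have "end_state AK ts = st i (nb (w @ [x]))" using D(1) D1(1) ij P by (simp add: tgt_def)
      moreover have "counter ts 0 = fc i 0 (w @ [x])"
        using D(1) D1(1) I P by (simp add: counter_snoc upd_def fc_snoc)
      ultimately show ?thesis using I by blast
    qed
  qed
qed

definition Good :: "nat \<Rightarrow> 'a list \<Rightarrow> 'a trans list \<Rightarrow> bool" where
  "Good i w ts \<longleftrightarrow> is_run k AK w ts \<and> end_state AK ts = (if w = [] then 0 else st i (nb w))
     \<and> counter ts 0 = fc i 0 w \<and> (\<forall>l. 0 < l \<longrightarrow> l < k \<longrightarrow> counter ts l = 0)"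

lemma Good_Nil: "Good i [] []" by (simp add: Good_def is_run_def)

lemma Good_fc: "Good i w ts \<Longrightarrow> 0 \<le> fc i 0 w"
  unfolding Good_def using run_counter_nonneg k0 by metis

lemma ext1:
  assumes G: "Good i w ts" and i: "1 \<le> i" "i \<le> K" and S: "stepK i (nb w) x = Some (d, j')"
    and nn: "0 \<le> fc i 0 w + d ! 0"
  shows "\<exists>ts'. Good i (w @ [x]) ts'"
proof -
  define t where "t = (end_state AK ts, x, d, st i j')"
  have P: "d ! 0 = (if x = la then g i (nb w) else 0) \<and> j' = (if x = lb then Suc (nb w) else nb w)
    \<and> (\<forall>l. 0 < l \<longrightarrow> l < k \<longrightarrow> d ! l = 0) \<and> nb w \<le> 2*K \<and> j' \<le> 2*K"
    using stepK_props[OF S i] by blast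
  have R: "is_run k AK w ts" and E: "end_state AK ts = (if w = [] then 0 else st i (nb w))"
    and C: "counter ts 0 = fc i 0 w" and O: "\<forall>l. 0 < l \<longrightarrow> l < k \<longrightarrow> counter ts l = 0"
    using G by (auto simp: Good_def)
  have tT: "t \<in> TK"
  proof (cases "w = []")
    case True
    then have e0: "end_state AK ts = 0" and S0: "stepK i 0 x = Some (d, j')" using E S by auto
    show ?thesis using e0 S0 i unfolding t_def TK_def by blast
  next
    case False
    then have e1: "end_state AK ts = st i (nb w)" using E by simp
    have b: "nb w \<le> 2*K" using P by simp
    show ?thesis using e1 S i b unfolding t_def TK_def by blast
  qed
  have nn': "\<forall>l<k. 0 \<le> counter ts l + upd t ! l"
  proof (intro allI impI)
    fix l assume "l < k"
    then show "0 \<le> counter ts l + upd t ! l"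
      using nn C O P by (cases "l = 0") (auto simp: t_def upd_def)
  qed
  have R': "is_run k AK (w @ [x]) (ts @ [t])"
    unfolding is_run_snoc using R tT nn' by (simp add: t_def lbl_def src_def)
  have "Good i (w @ [x]) (ts @ [t])"
    unfolding Good_def using R' C O P by (auto simp: t_def tgt_def upd_def counter_snoc fc_snoc)
  then show ?thesis by blast
qed

lemma ext_la:
  assumes G: "Good i w ts" and i: "1 \<le> i" "i \<le> K" and b: "nb w < K"
  shows "\<exists>ts'. Good i (w @ replicate n la) ts'"
proof (induction n)
  case 0 then show ?case using G by auto
next
  case (Suc n)
  then obtain ts1 where G1: "Good i (w @ replicate n la) ts1" by blast
  have nb1: "nb (w @ replicate n la) = nb w" by simp
  have S: "stepK i (nb (w @ replicate n la)) la = Some (if Suc (nb w) = i then ev k 1 else zv k, nb w)"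
    using b by (simp add: stepK_def)
  have "0 \<le> fc i 0 (w @ replicate n la)" by (rule Good_fc[OF G1])
  moreover have "(if Suc (nb w) = i then ev k 1 else zv k) ! 0 \<ge> 0" using k0 by simp
  ultimately have "\<exists>ts'. Good i ((w @ replicate n la) @ [la]) ts'"
    using ext1[OF G1 i S] by simp
  then show ?case by (simp add: replicate_append_same)
qed

lemma ext_lbs:
  assumes G: "Good i w ts" and i: "1 \<le> i" "i \<le> K"
  shows "nb w + n \<le> K + i \<Longrightarrow> \<exists>ts'. Good i (w @ replicate n lb) ts'"
proof (induction n)
  case 0 then show ?case using G by auto
next
  case (Suc n)
  then obtain ts1 where G1: "Good i (w @ replicate n lb) ts1" by auto
  have S: "stepK i (nb (w @ replicate n lb)) lb = Some (zv k, Suc (nb w + n))"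
    using Suc.prems ab by (simp add: stepK_def)
  have "0 \<le> fc i 0 (w @ replicate n lb)" by (rule Good_fc[OF G1])
  then have "\<exists>ts'. Good i ((w @ replicate n lb) @ [lb]) ts'"
    using ext1[OF G1 i S] k0 by simp
  then show ?case by (simp add: replicate_append_same)
qed

lemma ext_pre:
  assumes i: "1 \<le> i" "i \<le> K"
  shows "Good i w ts \<Longrightarrow> nb w + length xs \<le> K \<Longrightarrow> \<exists>ts'. Good i (w @ pre xs) ts'"
proof (induction xs arbitrary: w ts)
  case Nil then show ?case by auto
next
  case (Cons x xs)
  obtain ts1 where G1: "Good i (w @ replicate x la) ts1" using ext_la[OF Cons.prems(1) i] Cons.prems(2) by fastforce
  have "nb (w @ replicate x la) + 1 \<le> K + i" using Cons.prems(2) i by simp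
  then obtain ts2 where G2: "Good i ((w @ replicate x la) @ replicate 1 lb) ts2"
    using ext_lbs[OF G1 i] by blast
  have "nb ((w @ replicate x la) @ replicate 1 lb) + length xs \<le> K" using Cons.prems(2) by simp
  then obtain ts3 where "Good i (((w @ replicate x la) @ replicate 1 lb) @ pre xs) ts3"
    using Cons.IH[OF G2] by blast
  then show ?case by auto
qed

lemma ext_query:
  assumes G: "Good i w ts" and i: "1 \<le> i" "i \<le> K" and b: "nb w = K"
  shows "int z \<le> fc i 0 w \<Longrightarrow> \<exists>ts'. Good i (w @ replicate z la) ts'"
proof (induction z)
  case 0 then show ?case using G by auto
next
  case (Suc z)
  then obtain ts1 where G1: "Good i (w @ replicate z la) ts1" by auto
  have S: "stepK i (nb (w @ replicate z la)) la = Some (ev k (-1), K)"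
    using b by (simp add: stepK_def)
  have "fc i 0 (w @ replicate z la) = fc i 0 w - int z"
    using b i by (simp add: fc_append fc_rep_la g_K)
  then have "0 \<le> fc i 0 (w @ replicate z la) + ev k (-1) ! 0" using Suc.prems by simp
  then have "\<exists>ts'. Good i ((w @ replicate z la) @ [la]) ts'"
    using ext1[OF G1 i S] by simp
  then show ?case by (simp add: replicate_append_same)
qed

lemma fc_W:
  assumes "length xs = K" "\<iota> < K"
  shows "fc (Suc \<iota>) 0 (pre xs @ replicate z la @ replicate n lb) = int (xs ! \<iota>) - int z"
proof -
  have "fc (Suc \<iota>) 0 (pre xs) = int (xs ! \<iota>)" using fc_pre[of 0 xs "Suc \<iota>"] assms by simp
  then show ?thesis using assms by (simp add: fc_append fc_rep_la fc_rep_lb g_K)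
qed

lemma AK_mem:
  assumes xs: "length xs = K" and io: "\<iota> < K" and z: "z \<le> xs ! \<iota>" and R: "m = Reach \<Longrightarrow> z = xs ! \<iota>"
  shows "pre xs @ replicate z la @ replicate (Suc \<iota>) lb \<in> lang m k AK"
proof -
  define i where "i = Suc \<iota>"
  have i: "1 \<le> i" "i \<le> K" using io i_def by auto
  obtain ts1 where G1: "Good i ([] @ pre xs) ts1" using ext_pre[OF i Good_Nil] xs by fastforce
  have f1: "fc i 0 (pre xs) = int (xs ! \<iota>)" using fc_W[OF xs io, of 0 0] i_def by simp
  obtain ts2 where G2: "Good i (pre xs @ replicate z la) ts2"
    using ext_query[OF _ i, of "pre xs" ts1 z] G1 f1 z xs by auto
  obtain ts3 where G3: "Good i ((pre xs @ replicate z la) @ replicate (Suc \<iota>) lb) ts3"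
    using ext_lbs[OF G2 i, of "Suc \<iota>"] xs i_def by auto
  define W where "W = pre xs @ replicate z la @ replicate (Suc \<iota>) lb"
  have G: "Good i W ts3" using G3 W_def by simp
  have "W \<noteq> []" unfolding W_def by simp
  then have e: "end_state AK ts3 = st i (K + i)" using G xs unfolding Good_def W_def i_def by simp
  have c: "counter ts3 0 = int (xs ! \<iota>) - int z" using G fc_W[OF xs io, of z "Suc \<iota>"] unfolding Good_def W_def i_def by simp
  have acc: "accepting_run m k AK W ts3"
    unfolding accepting_run_def
  proof (intro conjI impI allI)
    show "is_run k AK W ts3" using G by (simp add: Good_def)
    show "end_state AK ts3 \<in> final AK" using e i by auto
    fix l assume "m = Reach" "l < k"
    then show "counter ts3 l = 0" using c R G unfolding Good_def by (cases "l = 0") auto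
  qed
  then show ?thesis unfolding lang_def W_def by blast
qed

lemma AK_not:
  assumes xs: "length xs = K" and io: "\<iota> < K"
    and L: "pre xs @ replicate z la @ replicate (Suc \<iota>) lb \<in> lang Cov k AK"
  shows "z \<le> xs ! \<iota>"
proof -
  define W where "W = pre xs @ replicate z la @ replicate (Suc \<iota>) lb"
  obtain ts where acc: "accepting_run Cov k AK W ts" using L W_def by (auto elim: lang_obtain)
  have R: "is_run k AK W ts" using acc by (simp add: accepting_run_def)
  have "ts \<noteq> []" using R is_run_length unfolding W_def by fastforce
  then obtain i where I: "1 \<le> i" "i \<le> K" "end_state AK ts = st i (nb W)" "counter ts 0 = fc i 0 W"
    using AK_inv[OF R] by blast
  have "end_state AK ts \<in> final AK" using acc by (simp add: accepting_run_def)
  then obtain i' where i': "end_state AK ts = st i' (K + i')" "1 \<le> i'" "i' \<le> K" by auto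
  have "st i (nb W) = st i' (K + i')" using I i' by simp
  then have "i = i'" "nb W = K + i'" using st_inj I i' by auto
  moreover have "nb W = K + Suc \<iota>" unfolding W_def using xs by simp
  ultimately have ii: "i = Suc \<iota>" by simp
  have "0 \<le> counter ts 0" using run_counter_nonneg[OF R k0] .
  then show ?thesis using I(4) fc_W[OF xs io, of z "Suc \<iota>"] ii unfolding W_def by simp
qed

end


lemma sum_list_Suc_bound: "\<forall>x\<in>set xs. x \<le> N \<Longrightarrow> sum_list (map Suc xs) \<le> length xs * Suc N"
  by (induction xs) auto

lemma upd_bound:
  assumes "finite (delta B)" "t \<in> delta B" "i < k"
  shows "\<bar>upd t ! i\<bar> \<le> int (\<Sum>t\<in>delta B. \<Sum>i<k. nat \<bar>upd t ! i\<bar>)"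
proof -
  have "nat \<bar>upd t ! i\<bar> \<le> (\<Sum>i<k. nat \<bar>upd t ! i\<bar>)"
    using assms(3) by (intro member_le_sum) auto
  also have "\<dots> \<le> (\<Sum>t\<in>delta B. \<Sum>i<k. nat \<bar>upd t ! i\<bar>)"
    using assms(1,2) by (intro member_le_sum) auto
  finally show ?thesis by linarith
qed

lemma arith_contra:
  fixes N Q C' k :: nat
  assumes "N = Q * C' ^ k" "(N + 1) ^ Suc k \<le> Q * (C' * (N + 1)) ^ k"
  shows False
proof -
  have "Q * (C' * (N + 1)) ^ k = (Q * C' ^ k) * (N + 1) ^ k"
    by (simp only: power_mult_distrib mult.assoc)
  also have "\<dots> = N * (N + 1) ^ k" by (simp only: assms(1)[symmetric])
  finally have "Q * (C' * (N + 1)) ^ k = N * (N + 1) ^ k" .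
  moreover have "N * (N + 1) ^ k < (N + 1) * (N + 1) ^ k" by simp
  ultimately show False using assms(2) by simp
qed

context KB begin

lemma hd_impossible:
  assumes KK: "K = Suc k"
  shows "lang m k AK \<notin> HDClass m k"
proof
  assume "lang m k AK \<in> HDClass m k"
  then obtain B :: "'a vass" and r where B: "lang m k AK = lang m k B" "is_vass k B" "is_resolver m k B r"
    by (auto simp: HDClass_def history_deterministic_def)
  define Q where "Q = card (states B)"
  define C where "C = (\<Sum>t\<in>delta B. \<Sum>i<k. nat \<bar>upd t ! i\<bar>)"
  define C' where "C' = C * K + 1"
  define N where "N = Q * C' ^ k"
  define X where "X = {xs. set xs \<subseteq> {0..N} \<and> length xs = K}"
  define Bd where "Bd = C * (K * Suc N)"
  define Y where "Y = states B \<times> {vs :: int list. set vs \<subseteq> {0..int Bd} \<and> length vs = k}"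
  define F where "F xs = (end_state B (resolve r (pre xs)), map (counter (resolve r (pre xs))) [0..<k])" for xs
  have finD: "finite (delta B)" and finS: "finite (states B)" using B(2) by (auto simp: is_vass_def)
  have run_pre: "is_run k B (pre xs) (resolve r (pre xs))" if "xs \<in> X" for xs
  proof -
    have l: "length xs = K" using that X_def by simp
    have "pre xs @ replicate (xs ! 0) la @ replicate (Suc 0) lb \<in> lang m k AK"
      by (rule AK_mem[OF l]) (use K0 in auto)
    then show ?thesis using resolver_prefix_run[OF B(3)] B(1) by auto
  qed
  have key: "xs ! \<iota> \<le> ys ! \<iota>" if xy: "xs \<in> X" "ys \<in> X" "F xs = F ys" and io: "\<iota> < K" for xs ys \<iota>
  proof -
    have lx: "length xs = K" and ly: "length ys = K" using xy X_def by auto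
    define v where "v = replicate (xs ! \<iota>) la @ replicate (Suc \<iota>) lb"
    have "pre xs @ v \<in> lang m k AK" unfolding v_def by (rule AK_mem[OF lx io]) auto
    then have m1: "pre xs @ v \<in> lang m k B" using B(1) by simp
    have e: "end_state B (resolve r (pre xs)) = end_state B (resolve r (pre ys))" using xy(3) F_def by simp
    have mm: "map (counter (resolve r (pre xs))) [0..<k] = map (counter (resolve r (pre ys))) [0..<k]"
      using xy(3) F_def by simp
    have c: "\<forall>i<k. counter (resolve r (pre xs)) i = counter (resolve r (pre ys)) i"
    proof (intro allI impI)
      fix i assume "i < k"
      then show "counter (resolve r (pre xs)) i = counter (resolve r (pre ys)) i"
        using arg_cong[OF mm, of "\<lambda>l. l ! i"] by simp
    qed
    have "pre ys @ v \<in> lang m k B" by (rule resolver_residual[OF B(3) m1 run_pre[OF xy(2)] e c])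
    then have "pre ys @ v \<in> lang m k AK" using B(1) by simp
    then have "pre ys @ v \<in> lang Cov k AK" using lang_reach_sub by (cases m) auto
    then show ?thesis unfolding v_def by (rule AK_not[OF ly io])
  qed
  have inj: "inj_on F X"
  proof (rule inj_onI)
    fix xs ys assume xy: "xs \<in> X" "ys \<in> X" "F xs = F ys"
    have lx: "length xs = K" and ly: "length ys = K" using xy X_def by auto
    show "xs = ys"
    proof (rule nth_equalityI)
      show "length xs = length ys" using lx ly by simp
      fix i assume "i < length xs"
      then have "i < K" using lx by simp
      then show "xs ! i = ys ! i" using key[OF xy] key[OF xy(2,1) xy(3)[symmetric]] by (simp add: le_antisym)
    qed
  qed
  have FY: "F ` X \<subseteq> Y"
  proof
    fix y assume "y \<in> F ` X"
    then obtain xs where xs: "xs \<in> X" "y = F xs" by blast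
    have R: "is_run k B (pre xs) (resolve r (pre xs))" by (rule run_pre[OF xs(1)])
    have st: "end_state B (resolve r (pre xs)) \<in> states B" by (rule run_end_state_in[OF B(2) R])
    have lp: "length (pre xs) \<le> K * Suc N"
    proof -
      have "\<forall>x\<in>set xs. x \<le> N" using xs(1) X_def by auto
      then have "sum_list (map Suc xs) \<le> length xs * Suc N" by (rule sum_list_Suc_bound)
      then show ?thesis using xs(1) X_def length_pre by simp
    qed
    have cb: "0 \<le> counter (resolve r (pre xs)) i \<and> counter (resolve r (pre xs)) i \<le> int Bd" if "i < k" for i
    proof
      show "0 \<le> counter (resolve r (pre xs)) i" by (rule run_counter_nonneg[OF R that])
      have sub: "set (resolve r (pre xs)) \<subseteq> delta B" using R by (simp add: is_run_def)
      have "\<forall>t\<in>delta B. \<bar>upd t ! i\<bar> \<le> int C" using upd_bound[OF finD _ that] C_def by blast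
      then have "\<bar>counter (resolve r (pre xs)) i\<bar> \<le> int C * int (length (resolve r (pre xs)))"
        by (rule counter_bound[OF sub])
      also have "\<dots> \<le> int C * int (K * Suc N)"
      proof (rule mult_left_mono)
        show "int (length (resolve r (pre xs))) \<le> int (K * Suc N)" using lp by (simp only: resolve_length of_nat_le_iff)
      qed simp
      finally show "counter (resolve r (pre xs)) i \<le> int Bd" unfolding Bd_def by simp
    qed
    have "set (map (counter (resolve r (pre xs))) [0..<k]) \<subseteq> {0..int Bd}" using cb by auto
    then show "y \<in> Y" using xs st unfolding Y_def F_def by simp
  qed
  have finY: "finite Y" unfolding Y_def using finS by (intro finite_cartesian_product finite_lists_length_eq) auto
  have "card X \<le> card Y" by (rule card_inj_on_le[OF inj FY finY])
  moreover have "card X = (N + 1) ^ K" unfolding X_def by (subst card_lists_length_eq) auto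
  moreover have "card Y = Q * (Bd + 1) ^ k"
  proof -
    have h: "nat (int Bd + 1) = Suc Bd" by arith
    show ?thesis unfolding Y_def Q_def by (simp add: card_cartesian_product card_lists_length_eq h)
  qed
  ultimately have le: "(N + 1) ^ Suc k \<le> Q * (Bd + 1) ^ k" using KK by simp
  have "Bd + 1 \<le> C' * (N + 1)" unfolding Bd_def C'_def by (simp add: algebra_simps)
  then have "(Bd + 1) ^ k \<le> (C' * (N + 1)) ^ k" by (rule power_mono) simp
  then have "Q * (Bd + 1) ^ k \<le> Q * (C' * (N + 1)) ^ k" by simp
  with le have "(N + 1) ^ Suc k \<le> Q * (C' * (N + 1)) ^ k" by linarith
  then show False using arith_contra N_def by blast
qed

lemma nd_mem: "lang m k AK \<in> NDClass m k"
  unfolding NDClass_def using AK_vass by blast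

end


lemma psub_witness: "A \<subseteq> B \<Longrightarrow> x \<in> B \<Longrightarrow> x \<notin> A \<Longrightarrow> A \<subset> B" by blast

theorem mainTheorem1:
  fixes k :: nat
  assumes "k \<ge> 1" and "card (UNIV :: ('a::finite) set) \<ge> 2"
  shows "(DetClass Cov k :: ('a::finite) list set set) \<subset> HDClass Cov k
       \<and> (HDClass Cov k :: 'a list set set) \<subset> NDClass Cov k
       \<and> (DetClass Reach k :: 'a list set set) \<subset> HDClass Reach k
       \<and> (HDClass Reach k :: 'a list set set) \<subset> NDClass Reach k"
proof -
  obtain la lb :: 'a where ab: "la \<noteq> lb"
  proof (cases "\<exists>la lb :: 'a. la \<noteq> lb")
    case True then show ?thesis using that by blast
  next
    case False
    then have "(UNIV :: 'a set) \<subseteq> {undefined}" by auto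
    then have "card (UNIV :: 'a set) \<le> card {undefined :: 'a}" by (intro card_mono) auto
    then show ?thesis using assms(2) by simp
  qed
  have k: "1 \<le> k" using assms(1) .
  interpret KB la lb k "Suc k"
    by unfold_locales (use ab k in auto)
  have c1: "(DetClass m k :: 'a list set set) \<subset> HDClass m k" for m
    by (rule psub_witness[OF det_sub_hd[OF k] det_lt_hd[OF k ab]])
  have c2: "(HDClass m k :: 'a list set set) \<subset> NDClass m k" for m
    by (rule psub_witness[OF hd_sub_nd nd_mem hd_impossible[OF refl]])
  show ?thesis using c1 c2 by blast
qed


end
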